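(* Let $\delta_1,\delta_2 \in \mathcal{D}^{LSL}$. Then for all $x,y\in[0,1]$ the star product of the lower semilinear copulas $S_{\delta_1}$ and $S_{\delta_2}$ is given by $$(S_{\delta_1}\ast S_{\delta_2})(x,y) = \begin{cases} \dfrac{x}{y^2}\delta_1(y)\delta_2(y) + xy\displaystyle\int_{[y,1]} \left(\tfrac{\delta_1(u)}{u}\right)'\left(\tfrac{\delta_2(u)}{u}\right)' \, d\lambda(u) & \text{if } y > x,\\[2ex] \dfrac{y}{x^2}\delta_1(x)\delta_2(x) + xy\displaystyle\int_{[x,1]} \left(\tfrac{\delta_1(u)}{u}\right)'\left(\tfrac{\delta_2(u)}{u}\right)' \, d\lambda(u) & \text{if } y \leq x.\end{cases}$$ In particular, $S_{\delta_1}\ast S_{\delta_2}$ is a lower semilinear copula, i.e. $S_{\delta_1}\ast S_{\delta_2}\in\mathcal{C}^{LSL}$.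
   Context: A (bivariate) copula is a distribution function on $[0,1]^2$ with uniform marginals on $[0,1]$; $\lambda$ denotes Lebesgue measure on $[0,1]$. Let $\mathcal{D}$ be the set of all functions $\delta:[0,1]\to[0,1]$ with $\delta(u)\le u$ for all $u$, $\delta(1)=1$, $\delta$ non-decreasing, and $|\delta(v)-\delta(u)|\le 2|v-u|$ for all $u,v$ (copula diagonals). Let $\mathcal{D}^{LSL}$ be the set of $\delta\in\mathcal{D}$ such that $x\mapsto \delta(x)/x$ is non-decreasing on $(0,1]$ and $x\mapsto \delta(x)/x^2$ is non-increasing on $(0,1]$. For $\delta\in\mathcal{D}^{LSL}$ define $S_\delta(x,y)= y\,\delta(x)/x$ if $y\le x$ and $S_\delta(x,y)=x\,\delta(y)/y$ otherwise (with the convention $0/0:=0$); it is known that $S_\delta$ is a copula. A copula $C$ is called lower semilinear (LSL) if for every $x\in(0,1]$ the maps $t\mapsto C(t,x)$ and $t\mapsto C(x,t)$ are linear on $[0,x]$; the set $\mathcal{C}^{LSL}$ of all LSL copulas equals $\{S_\delta:\delta\in\mathcal{D}^{LSL}\}$. The star (Markov) product of copulas $A,B$ is $(A\ast B)(x,y)=\int_{[0,1]}\partial_2A(x,s)\,\partial_1B(s,y)\,d\lambda(s)$, where $\partial_i$ is the partial derivative in the $i$-th coordinate. The derivatives $(\delta_i(u)/u)'$ exist $\lambda$-almost everywhere since the functions are Lipschitz on compact subintervals of $(0,1]$. *)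

theory Defs
  imports "HOL-Analysis.Analysis"
begin

text \<open>Bivariate copulas, represented as curried functions real => real => real;
  only their values on [0,1]^2 matter. Standard characterisation: grounded,
  uniform margins, 2-increasing on [0,1]^2.\<close>
definition is_copula :: "(real \<Rightarrow> real \<Rightarrow> real) \<Rightarrow> bool" where
  "is_copula C \<longleftrightarrow>
     (\<forall>t\<in>{0..1}. C 0 t = 0 \<and> C t 0 = 0 \<and> C 1 t = t \<and> C t 1 = t) \<and>
     (\<forall>x1\<in>{0..1}. \<forall>x2\<in>{0..1}. \<forall>y1\<in>{0..1}. \<forall>y2\<in>{0..1}.
        x1 \<le> x2 \<longrightarrow> y1 \<le> y2 \<longrightarrow> C x2 y2 - C x2 y1 - C x1 y2 + C x1 y1 \<ge> 0)"

definition diagonals :: "(real \<Rightarrow> real) set" where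
  "diagonals = {\<delta>. (\<forall>u\<in>{0..1}. 0 \<le> \<delta> u \<and> \<delta> u \<le> u) \<and> \<delta> 1 = 1 \<and>
      mono_on {0..1} \<delta> \<and>
      (\<forall>u\<in>{0..1}. \<forall>v\<in>{0..1}. \<bar>\<delta> v - \<delta> u\<bar> \<le> 2 * \<bar>v - u\<bar>)}"

definition diagonals_LSL :: "(real \<Rightarrow> real) set" where
  "diagonals_LSL = {\<delta>\<in>diagonals.
      (\<forall>x\<in>{0<..1}. \<forall>y\<in>{0<..1}. x \<le> y \<longrightarrow> \<delta> x / x \<le> \<delta> y / y) \<and>
      (\<forall>x\<in>{0<..1}. \<forall>y\<in>{0<..1}. x \<le> y \<longrightarrow> \<delta> y / y^2 \<le> \<delta> x / x^2)}"

text \<open>S_delta; Isabelle's convention x / 0 = 0 matches 0/0 := 0.\<close>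
definition S_delta :: "(real \<Rightarrow> real) \<Rightarrow> real \<Rightarrow> real \<Rightarrow> real" where
  "S_delta \<delta> x y = (if y \<le> x then y * \<delta> x / x else x * \<delta> y / y)"

definition is_LSL :: "(real \<Rightarrow> real \<Rightarrow> real) \<Rightarrow> bool" where
  "is_LSL C \<longleftrightarrow> (\<forall>x\<in>{0<..1}.
      (\<exists>a b. \<forall>t\<in>{0..x}. C t x = a * t + b) \<and>
      (\<exists>a b. \<forall>t\<in>{0..x}. C x t = a * t + b))"

definition copulas_LSL :: "(real \<Rightarrow> real \<Rightarrow> real) set" where
  "copulas_LSL = {C. is_copula C \<and> is_LSL C}"

text \<open>Star (Markov) product; partial derivatives exist a.e., and we use the
  (Lebesgue, i.e. completed) integral so values on the null set of
  non-differentiability points are irrelevant.\<close>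
definition star :: "(real \<Rightarrow> real \<Rightarrow> real) \<Rightarrow> (real \<Rightarrow> real \<Rightarrow> real) \<Rightarrow> real \<Rightarrow> real \<Rightarrow> real" where
  "star A B x y = (LINT s|lebesgue_on {0..1}. deriv (\<lambda>t. A x t) s * deriv (\<lambda>t. B t y) s)"

end

theory Submission
  imports Defs
begin

lemma lborel_fin: "A \<subseteq> {c..e::real} \<Longrightarrow> emeasure lborel A \<noteq> \<infinity>"
proof -
  assume "A \<subseteq> {c..e}"
  then have "emeasure lborel A \<le> emeasure lborel {c..e}" by (intro emeasure_mono) auto
  then show ?thesis by (cases "c \<le> e") (auto simp: top_unique)
qed

lemma sum_cballs:
  fixes N :: "real measure"
  assumes "countable C" "disjoint_family_on (\<lambda>i. cball (fst i) (snd i)) C" "sets N = sets borel"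
  shows "emeasure N (\<Union>i\<in>C. cball (fst i) (snd i)) = (\<integral>\<^sup>+i. emeasure N (cball (fst i) (snd i)) \<partial>count_space C)"
  by (rule emeasure_UN_countable) (use assms in auto)

lemma UN_cball_borel: "countable C \<Longrightarrow> (\<Union>i\<in>C. cball (fst i) (snd i)) \<in> sets (borel :: real measure)"
  by (intro sets.countable_UN'') auto

lemma negligible_by_cover:
  fixes Z :: "real set"
  assumes H: "\<And>\<eta>. \<eta> > 0 \<Longrightarrow> \<exists>W N. Z \<subseteq> W \<union> N \<and> negligible N \<and> W \<in> sets borel \<and> emeasure lborel W \<le> ennreal \<eta>"
  shows "negligible Z"
  unfolding negligible_outer_le
proof (intro allI impI)
  fix e :: real assume "e > 0"
  then obtain W N where WN: "Z \<subseteq> W \<union> N" "negligible N" "W \<in> sets borel" "emeasure lborel W \<le> ennreal e"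
    using H by blast
  have N: "N \<in> null_sets lebesgue" using WN by (simp add: negligible_iff_null_sets)
  have Wl: "W \<in> sets lebesgue" using WN by simp
  have eW: "emeasure lebesgue W \<le> ennreal e" using WN by (simp add: emeasure_completion)
  have "emeasure lebesgue (W \<union> N) = emeasure lebesgue W"
    using N Wl by (simp add: emeasure_Un_null_set)
  then have fin: "W \<union> N \<in> lmeasurable"
    using eW Wl N by (intro fmeasurableI) (auto simp: top_unique intro: le_less_trans[OF _ ennreal_less_top])
  have "measure lebesgue (W \<union> N) = measure lebesgue W"
    using N Wl by (simp add: measure_Un_null_set)
  also have "\<dots> \<le> e"
    using eW \<open>e > 0\<close> by (simp add: measure_def enn2real_leI)
  finally show "\<exists>T. Z \<subseteq> T \<and> T \<in> lmeasurable \<and> measure lebesgue T \<le> e"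
    using WN fin by blast
qed

lemma vitali_intervals:
  fixes S U :: "real set" and P :: "real \<Rightarrow> real \<Rightarrow> bool"
  assumes U: "open U" "S \<subseteq> U"
   and H: "\<And>x d. x \<in> S \<Longrightarrow> d > 0 \<Longrightarrow> \<exists>c e. c \<le> x \<and> x \<le> e \<and> c < e \<and> e - c < d \<and> P c e"
  obtains C where "countable C"
    "\<And>i. i \<in> C \<Longrightarrow> snd i > 0 \<and> cball (fst i) (snd i) \<subseteq> U \<and> P (fst i - snd i) (fst i + snd i)"
    "disjoint_family_on (\<lambda>i. cball (fst i) (snd i)) C"
    "negligible (S - (\<Union>i\<in>C. cball (fst i) (snd i)))"
proof -
  define K where "K = {i::real\<times>real. snd i > 0 \<and> cball (fst i) (snd i) \<subseteq> U \<and> P (fst i - snd i) (fst i + snd i)}"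
  have "\<exists>i. i \<in> K \<and> x \<in> cball (fst i) (snd i) \<and> snd i < d" if xS: "x \<in> S" and d0: "0 < d" for x d
  proof -
    obtain \<rho> where \<rho>: "\<rho> > 0" "ball x \<rho> \<subseteq> U" using U xS openE[of U x] by blast
    obtain c e where ce: "c \<le> x" "x \<le> e" "c < e" "e - c < min d \<rho>" "P c e"
      using H[OF xS, of "min d \<rho>"] \<rho> d0 by auto
    have cb: "cball ((c+e)/2) ((e-c)/2) = {c..e}"
      by (simp add: cball_eq_atLeastAtMost field_simps)
    have "{c..e} \<subseteq> ball x \<rho>"
      using ce by (auto simp: dist_real_def)
    then show ?thesis
      using ce \<rho> cb by (intro exI[of _ "((c+e)/2, (e-c)/2)"]) (auto simp: K_def field_simps)
  qed
  note ex = this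
  obtain C where C: "countable C" "C \<subseteq> K"
     "pairwise (\<lambda>i j. disjnt (cball (fst i) (snd i)) (cball (fst j) (snd j))) C"
     "negligible(S - (\<Union>i \<in> C. cball (fst i) (snd i)))"
    by (rule Vitali_covering_theorem_cballs[where a=fst and r=snd and K=K and S=S, OF _ ex]) (auto simp: K_def)
  show ?thesis
    apply (rule that[OF C(1) _ _ C(4)])
    using C(2) apply (force simp: K_def)
    using C(3) by (auto simp: pairwise_def disjnt_def disjoint_family_on_def)
qed

lemma deriv_from_intervals:
  fixes G :: "real \<Rightarrow> real"
  assumes H: "\<And>\<epsilon>. \<epsilon> > 0 \<Longrightarrow> \<exists>\<delta>>0. \<forall>c e. c \<le> x \<longrightarrow> x \<le> e \<longrightarrow> c < e \<longrightarrow> e - c < \<delta> \<longrightarrow>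
              \<bar>(G e - G c) - D * (e - c)\<bar> \<le> \<epsilon> * (e - c)"
  shows "(G has_real_derivative D) (at x)"
  unfolding DERIV_def LIM_eq
proof (intro allI impI)
  fix r :: real assume r: "r > 0"
  obtain \<delta> where \<delta>: "\<delta> > 0" and d: "\<And>c e. c \<le> x \<Longrightarrow> x \<le> e \<Longrightarrow> c < e \<Longrightarrow> e - c < \<delta> \<Longrightarrow>
              \<bar>(G e - G c) - D * (e - c)\<bar> \<le> (r/2) * (e - c)"
    using H[of "r/2"] r by auto
  show "\<exists>s>0. \<forall>h. h \<noteq> 0 \<and> norm (h - 0) < s \<longrightarrow> norm ((G (x + h) - G x) / h - D) < r"
  proof (intro exI[of _ \<delta>] conjI allI impI)
    fix h :: real assume h: "h \<noteq> 0 \<and> norm (h - 0) < \<delta>"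
    have eq: "(G (x + h) - G x) / h - D = (G (x + h) - G x - D * h) / h"
      using h by (simp add: field_simps)
    have "\<bar>G (x + h) - G x - D * h\<bar> \<le> (r/2) * \<bar>h\<bar>"
    proof (cases "h > 0")
      case True
      then show ?thesis using d[of x "x + h"] h by auto
    next
      case False
      then have "h < 0" using h by auto
      then have "\<bar>(G x - G (x + h)) - D * (x - (x + h))\<bar> \<le> (r/2) * (x - (x + h))"
        using d[of "x + h" x] h by auto
      then show ?thesis using \<open>h < 0\<close> by (simp add: abs_minus_commute algebra_simps)
    qed
    then have "\<bar>G (x + h) - G x - D * h\<bar> / \<bar>h\<bar> \<le> r/2"
      using h by (simp add: divide_le_eq)
    then have "\<bar>G (x + h) - G x - D * h\<bar> / \<bar>h\<bar> < r" using r by linarith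
    then show "norm ((G (x + h) - G x) / h - D) < r"
      unfolding eq by (simp add: abs_divide)
  qed (rule \<delta>)
qed

locale Gfun =
  fixes G :: "real \<Rightarrow> real" and M :: real
  assumes G_strict: "\<And>x y. x < y \<Longrightarrow> G x < G y"
    and G_lip: "\<And>x y. \<bar>G y - G x\<bar> \<le> M * \<bar>y - x\<bar>"
    and G_surj: "surj G"
begin

definition "phi = inv G"

lemma G_inj: "inj G"
  by (metis G_strict injI linorder_neqE_linordered_idom order_less_irrefl)

lemma G_phi[simp]: "G (phi y) = y"
  unfolding phi_def using G_surj by (simp add: surj_f_inv_f)

lemma phi_G[simp]: "phi (G x) = x"
  unfolding phi_def using G_inj by simp

lemma G_le_iff[simp]: "G x \<le> G y \<longleftrightarrow> x \<le> y"
  by (cases x y rule: linorder_cases) (auto dest: G_strict)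

lemma G_less_iff[simp]: "G x < G y \<longleftrightarrow> x < y"
  by (metis G_le_iff linorder_not_le)

lemma phi_mono: "mono phi"
  by (metis G_le_iff G_phi monoI)

lemma phi_borel[measurable]: "phi \<in> borel_measurable borel"
  using phi_mono borel_measurable_mono by blast

definition "nu = distr lborel borel phi"

lemma sets_nu[simp, measurable_cong]: "sets nu = sets borel"
  by (simp add: nu_def)

lemma vimage_phi: "phi -` A = G ` A"
  by (auto simp: image_iff) (metis G_phi)+

lemma emeasure_nu: "A \<in> sets borel \<Longrightarrow> emeasure nu A = emeasure lborel (G ` A)"
  unfolding nu_def by (subst emeasure_distr) (auto simp: vimage_phi)

lemma G_image_Icc: "G ` {c..e} = {G c..G e}"
proof
  show "{G c..G e} \<subseteq> G ` {c..e}"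
  proof
    fix y assume "y \<in> {G c..G e}"
    then have "phi y \<in> {c..e}" by (metis G_le_iff G_phi atLeastAtMost_iff)
    then show "y \<in> G ` {c..e}" by (metis G_phi imageI)
  qed
qed auto

lemma emeasure_nu_Icc: "c \<le> e \<Longrightarrow> emeasure nu {c..e} = ennreal (G e - G c)"
  by (simp add: emeasure_nu G_image_Icc)

lemma M_nonneg: "0 \<le> M"
proof -
  have "G 0 < G 1" by (rule G_strict) simp
  moreover have "\<bar>G 1 - G 0\<bar> \<le> M" using G_lip[of 0 1] by simp
  ultimately show ?thesis by linarith
qed

lemma nu_ac: "absolutely_continuous lborel nu"
  unfolding absolutely_continuous_def
proof
  fix A :: "real set" assume A: "A \<in> null_sets lborel"
  then have Ab: "A \<in> sets borel" by auto
  have "negligible A"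
    using A by (simp add: negligible_iff_null_sets null_sets_completionI)
  then have "negligible (G ` A)"
    by (rule negligible_locally_Lipschitz_image[of A G, simplified])
       (metis G_lip open_UNIV UNIV_I real_norm_def)
  moreover have "G ` A \<in> sets borel"
    using Ab by (metis vimage_phi measurable_sets_borel phi_borel)
  ultimately have "G ` A \<in> null_sets lborel"
    by (metis negligible_iff_null_sets null_sets_completion_iff sets_lborel)
  then show "A \<in> null_sets nu"
    using Ab by (simp add: null_sets_def emeasure_nu)
qed

lemma nu_sigma_finite: "sigma_finite_measure nu"
proof
  show "\<exists>A. countable A \<and> A \<subseteq> sets nu \<and> \<Union> A = space nu \<and> (\<forall>a\<in>A. emeasure nu a \<noteq> \<infinity>)"
    apply (intro exI[of _ "range (\<lambda>n::nat. {-real n..real n})"])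
    apply (auto simp: emeasure_nu_Icc)
    apply (simp add: nu_def)
    by (metis abs_le_D1 abs_le_iff  minus_le_iff real_arch_simple)
qed

lemma nu_fin: "A \<in> sets borel \<Longrightarrow> A \<subseteq> {c..e} \<Longrightarrow> emeasure nu A \<noteq> \<infinity>"
proof -
  assume A: "A \<in> sets borel" "A \<subseteq> {c..e}"
  show ?thesis
  proof (cases "c \<le> e")
    case True
    have "emeasure nu A \<le> emeasure nu {c..e}" using A by (intro emeasure_mono) auto
    then show ?thesis using True by (auto simp: emeasure_nu_Icc top_unique)
  next
    case False then have "A = {}" using A by auto
    then show ?thesis by simp
  qed
qed

lemma emeasure_nu_cball: "0 \<le> r \<Longrightarrow> emeasure nu (cball m r) = ennreal (G (m + r) - G (m - r))"
  by (simp add: cball_eq_atLeastAtMost emeasure_nu_Icc)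

definition "k0 = RN_deriv lborel nu"
definition "k x = enn2real (k0 x)"

lemma k0_borel[measurable]: "k0 \<in> borel_measurable borel"
  unfolding k0_def using borel_measurable_RN_deriv[of lborel nu] by simp

lemma k_borel[measurable]: "k \<in> borel_measurable borel"
  unfolding k_def by measurable

lemma k_nonneg: "0 \<le> k x"
  by (simp add: k_def)

lemma density_k0: "density lborel k0 = nu"
  unfolding k0_def by (rule sigma_finite_measure.density_RN_deriv[OF sigma_finite_lborel nu_ac]) simp

lemma k0_finite: "AE x in lborel. k0 x \<noteq> \<infinity>"
  unfolding k0_def by (rule sigma_finite_measure.RN_deriv_finite[OF sigma_finite_lborel nu_sigma_finite nu_ac]) simp

lemma density_k: "density lborel (\<lambda>x. ennreal (k x)) = nu"
proof -
  have "density lborel (\<lambda>x. ennreal (k x)) = density lborel k0"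
    by (rule density_cong) (use k0_finite in \<open>auto simp: k_def ennreal_enn2real_if\<close>)
  then show ?thesis by (simp add: density_k0)
qed

lemma emeasure_nu_k: "A \<in> sets borel \<Longrightarrow> emeasure nu A = (\<integral>\<^sup>+x. ennreal (k x) * indicator A x \<partial>lborel)"
  by (subst density_k[symmetric]) (simp add: emeasure_density)

lemma k_integral: assumes "c \<le> e" shows "(k has_integral (G e - G c)) {c..e}"
proof -
  have "(\<integral>\<^sup>+x. ennreal (k x * indicator {c..e} x) \<partial>lborel) = emeasure nu {c..e}"
    by (subst emeasure_nu_k) (auto intro!: nn_integral_cong simp: indicator_def)
  also have "\<dots> = ennreal (G e - G c)" using assms by (simp add: emeasure_nu_Icc)
  finally have "((\<lambda>x. k x * indicator {c..e} x) has_integral (G e - G c)) UNIV"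
    using assms by (intro nn_integral_has_integral) (auto simp: k_nonneg)
  then show ?thesis
    by (simp add: has_integral_restrict_UNIV[symmetric, of _ _ "{c..e}"] indicator_def of_bool_def if_distrib cong: if_cong)
qed

lemma nu_le_k:
  assumes A: "A \<in> sets borel" and le: "\<And>x. x \<in> A \<Longrightarrow> k x \<le> p"
  shows "emeasure nu A \<le> ennreal p * emeasure lborel A"
proof -
  have "emeasure nu A = (\<integral>\<^sup>+x. ennreal (k x) * indicator A x \<partial>lborel)"
    using A by (rule emeasure_nu_k)
  also have "\<dots> \<le> (\<integral>\<^sup>+x. ennreal p * indicator A x \<partial>lborel)"
    by (intro nn_integral_mono) (auto simp: le ennreal_leI split: split_indicator)
  also have "\<dots> = ennreal p * emeasure lborel A"
    using A by (simp add: nn_integral_cmult_indicator)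
  finally show ?thesis .
qed

lemma nu_ge_k:
  assumes A: "A \<in> sets borel" and le: "\<And>x. x \<in> A \<Longrightarrow> q \<le> k x"
  shows "ennreal q * emeasure lborel A \<le> emeasure nu A"
proof -
  have "ennreal q * emeasure lborel A = (\<integral>\<^sup>+x. ennreal q * indicator A x \<partial>lborel)"
    using A by (simp add: nn_integral_cmult_indicator)
  also have "\<dots> \<le> (\<integral>\<^sup>+x. ennreal (k x) * indicator A x \<partial>lborel)"
    by (intro nn_integral_mono) (auto simp: le ennreal_leI split: split_indicator)
  also have "\<dots> = emeasure nu A"
    using A by (rule emeasure_nu_k[symmetric])
  finally show ?thesis .
qed

lemma vitali_U:
  assumes pq: "p < q" and ab: "a \<le> b"
  shows "negligible {x \<in> {a<..<b}. k x < p \<and> (\<forall>d>0. \<exists>c e. c \<le> x \<and> x \<le> e \<and> c < e \<and> e - c < d \<and> q * (e - c) < G e - G c)}"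
    (is "negligible ?Z")
proof (cases "0 < p")
  case False
  have "x \<notin> ?Z" for x using k_nonneg[of x] False by auto
  then have Ze: "?Z = {}" by blast
  show ?thesis unfolding Ze by simp
next
  case True
  show ?thesis
  proof (rule negligible_by_cover)
    fix \<eta> :: real assume \<eta>: "\<eta> > 0"
    define B where "B = {x \<in> {a<..<b}. k x < p}"
    have Bb[measurable]: "B \<in> sets borel" unfolding B_def by measurable
    define \<nu>' where "\<nu>' = density lborel (\<lambda>x. ennreal (k x) * indicator {a<..<b} x)"
    have sets'[simp]: "sets \<nu>' = sets borel" by (simp add: \<nu>'_def)
    have \<nu>'_eq: "emeasure \<nu>' A = emeasure nu (A \<inter> {a<..<b})" if "A \<in> sets borel" for A
      using that by (auto simp: \<nu>'_def emeasure_density emeasure_nu_k intro!: nn_integral_cong split: split_indicator)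
    have fin: "emeasure \<nu>' (space \<nu>') \<noteq> \<infinity>"
      using \<nu>'_eq[of UNIV] nu_fin[of "{a<..<b}" a b] by (simp add: \<nu>'_def subset_eq)
    define \<eta>' where "\<eta>' = \<eta> * (q - p)"
    have \<eta>': "\<eta>' > 0" using \<eta> pq by (simp add: \<eta>'_def)
    have BB: "B \<subseteq> {a..b}" by (auto simp: B_def)
    have Bfin: "emeasure nu B = ennreal (measure nu B)"
      using nu_fin[OF Bb BB] by (simp add: emeasure_eq_ennreal_measure)
    have "emeasure \<nu>' B = (INF U\<in>{U. B \<subseteq> U \<and> open U}. emeasure \<nu>' U)"
      by (rule outer_regular[OF sets' fin Bb])
    moreover have "emeasure \<nu>' B < emeasure nu B + ennreal \<eta>'"
    proof -
      have "B \<inter> {a<..<b} = B" by (auto simp: B_def)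
      then have "emeasure \<nu>' B = ennreal (measure nu B)" using \<nu>'_eq[OF Bb] Bfin by simp
      also have "\<dots> < ennreal (measure nu B + \<eta>')"
        using \<eta>' by (intro ennreal_lessI) (auto intro: add_nonneg_pos)
      also have "\<dots> = emeasure nu B + ennreal \<eta>'"
        using Bfin \<eta>' by (simp add: ennreal_plus)
      finally show ?thesis .
    qed
    ultimately obtain U where U: "B \<subseteq> U" "open U" "emeasure \<nu>' U < emeasure nu B + ennreal \<eta>'"
      by (auto simp: INF_less_iff)
    define U0 where "U0 = U \<inter> {a<..<b}"
    have U0: "open U0" "B \<subseteq> U0" "U0 \<in> sets borel" using U by (auto simp: U0_def B_def)
    have U0B: "U0 \<subseteq> {a..b}" by (auto simp: U0_def)
    have nuU0: "emeasure nu U0 < emeasure nu B + ennreal \<eta>'"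
      using \<nu>'_eq[of U] U by (simp add: U0_def)
    have Zsub: "?Z \<subseteq> U0" using U0 by (auto simp: B_def)
    obtain C where C: "countable C"
      "\<And>i. i \<in> C \<Longrightarrow> snd i > 0 \<and> cball (fst i) (snd i) \<subseteq> U0 \<and> q * ((fst i + snd i) - (fst i - snd i)) < G (fst i + snd i) - G (fst i - snd i)"
      "disjoint_family_on (\<lambda>i. cball (fst i) (snd i)) C"
      "negligible (?Z - (\<Union>i\<in>C. cball (fst i) (snd i)))"
      by (rule vitali_intervals[OF U0(1) Zsub, of "\<lambda>c e. q * (e - c) < G e - G c"]) auto
    define W where "W = (\<Union>i\<in>C. cball (fst i) (snd i))"
    have Wb: "W \<in> sets borel" unfolding W_def using C(1) by (rule UN_cball_borel)
    have WU0: "W \<subseteq> U0" using C(2) by (auto simp: W_def)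
    have lW: "emeasure lborel W = (\<integral>\<^sup>+i. emeasure lborel (cball (fst i) (snd i)) \<partial>count_space C)"
      unfolding W_def by (rule sum_cballs[OF C(1) C(3)]) simp
    have nW: "emeasure nu W = (\<integral>\<^sup>+i. emeasure nu (cball (fst i) (snd i)) \<partial>count_space C)"
      unfolding W_def by (rule sum_cballs[OF C(1) C(3)]) simp
    have "ennreal q * emeasure lborel W = (\<integral>\<^sup>+i. ennreal q * emeasure lborel (cball (fst i) (snd i)) \<partial>count_space C)"
      unfolding lW by (rule nn_integral_cmult[symmetric]) simp
    also have "\<dots> \<le> (\<integral>\<^sup>+i. emeasure nu (cball (fst i) (snd i)) \<partial>count_space C)"
    proof (intro nn_integral_mono)
      fix i assume "i \<in> space (count_space C)"
      then have i: "i \<in> C" by simp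
      then have "snd i > 0" using C(2) by blast
      moreover have le: "q * (2 * snd i) \<le> G (fst i + snd i) - G (fst i - snd i)"
        using C(2)[OF i] by simp
      ultimately show "ennreal q * emeasure lborel (cball (fst i) (snd i)) \<le> emeasure nu (cball (fst i) (snd i))"
        using True pq
        by (simp add: cball_eq_atLeastAtMost emeasure_nu_Icc ennreal_leI[OF le] flip: ennreal_mult del: ennreal_mult)
    qed
    also have "\<dots> = emeasure nu W" using nW by simp
    finally have ineq1: "ennreal q * emeasure lborel W \<le> emeasure nu W" .
    have WB: "W \<inter> B \<in> sets borel" using Wb Bb by auto
    have "emeasure nu (W \<inter> B) \<le> ennreal p * emeasure lborel (W \<inter> B)"
      using WB by (rule nu_le_k) (auto simp: B_def)
    have lWfin: "emeasure lborel W \<noteq> \<infinity>" using WU0 U0B by (intro lborel_fin) auto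
    have lWBfin: "emeasure lborel (W \<inter> B) \<noteq> \<infinity>" using WU0 U0B by (intro lborel_fin) auto
    have nWfin: "emeasure nu W \<noteq> \<infinity>" using WU0 U0B Wb by (intro nu_fin) auto
    have nWBfin: "emeasure nu (W \<inter> B) \<noteq> \<infinity>" using WU0 U0B WB by (intro nu_fin) auto
    have nU0fin: "emeasure nu U0 \<noteq> \<infinity>" using U0 U0B by (intro nu_fin) auto
    have nDfin: "emeasure nu (U0 - B) \<noteq> \<infinity>" using U0 U0B Bb by (intro nu_fin) auto
    have r1: "q * measure lborel W \<le> measure nu W"
      using ineq1 lWfin nWfin True pq
      by (simp add: emeasure_eq_ennreal_measure flip: ennreal_mult del: ennreal_mult)
    have r2: "measure nu (W \<inter> B) \<le> p * measure lborel (W \<inter> B)"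
      using \<open>emeasure nu (W \<inter> B) \<le> _\<close> lWBfin nWBfin True
      by (simp add: emeasure_eq_ennreal_measure flip: ennreal_mult del: ennreal_mult)
    have r3: "measure lborel (W \<inter> B) \<le> measure lborel W"
      using lWfin Wb WB by (intro measure_mono_fmeasurable) (auto simp: fmeasurable_def less_top)
    have r4: "measure nu W \<le> measure nu (W \<inter> B) + measure nu (U0 - B)"
    proof -
      have f: "emeasure nu ((W \<inter> B) \<union> (U0 - B)) \<noteq> \<infinity>"
        by (rule nu_fin[of _ a b]) (use WB U0 Bb U0B WU0 in auto)
      have "measure nu W \<le> measure nu ((W \<inter> B) \<union> (U0 - B))"
        using WU0 Wb WB U0 Bb f
        by (intro measure_mono_fmeasurable) (auto simp: fmeasurable_def less_top)
      also have "\<dots> \<le> measure nu (W \<inter> B) + measure nu (U0 - B)"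
        using WB U0 Bb nWBfin nDfin by (intro measure_subadditive) auto
      finally show ?thesis .
    qed
    have r5: "measure nu (U0 - B) < \<eta>'"
    proof -
      have "measure nu (U0 - B) = measure nu U0 - measure nu B"
        using nU0fin U0 Bb by (intro measure_Diff) auto
      moreover have "ennreal (measure nu U0) < ennreal (measure nu B + \<eta>')"
      proof -
        have nf: "emeasure nu U0 \<noteq> top" using nU0fin by simp
        have e1: "emeasure nu U0 = ennreal (measure nu U0)" by (rule emeasure_eq_ennreal_measure[OF nf])
        have "ennreal (measure nu U0) < ennreal (measure nu B) + ennreal \<eta>'"
          using nuU0 by (simp only: e1 Bfin)
        moreover have "ennreal (measure nu B) + ennreal \<eta>' = ennreal (measure nu B + \<eta>')"
          using \<eta>' by (intro ennreal_plus[symmetric]) auto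
        ultimately show ?thesis by simp
      qed
      then have "measure nu U0 < measure nu B + \<eta>'"
        using ennreal_less_iff[of "measure nu U0" "measure nu B + \<eta>'"] by simp
      ultimately show ?thesis by simp
    qed
    have r6: "p * measure lborel (W \<inter> B) \<le> p * measure lborel W"
      using r3 True by (intro mult_left_mono) auto
    have "q * measure lborel W \<le> p * measure lborel W + \<eta>'"
      using r1 r2 r4 r5 r6 by linarith
    moreover have e1: "(q - p) * measure lborel W = q * measure lborel W - p * measure lborel W"
      by (rule left_diff_distrib)
    moreover have e2: "\<eta>' = (q - p) * \<eta>" by (simp add: \<eta>'_def mult.commute)
    ultimately have "(q - p) * measure lborel W \<le> (q - p) * \<eta>"
      by linarith
    then have mW: "measure lborel W \<le> \<eta>"
      by (rule mult_left_le_imp_le) (use pq in simp)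
    have eW: "emeasure lborel W = ennreal (measure lborel W)"
      using lWfin by (intro emeasure_eq_ennreal_measure) simp
    have eWl: "emeasure lborel W \<le> ennreal \<eta>"
      unfolding eW using mW by (rule ennreal_leI)
    have negl: "negligible (?Z - W)" using C(4) unfolding W_def .
    show "\<exists>W N. ?Z \<subseteq> W \<union> N \<and> negligible N \<and> W \<in> sets borel \<and> emeasure lborel W \<le> ennreal \<eta>"
      apply (rule exI[of _ W])
      apply (rule exI[of _ "?Z - W"])
      using negl Wb eWl by blast
  qed
qed

lemma vitali_L:
  assumes pq: "p < q" and ab: "a \<le> b"
  shows "negligible {x \<in> {a<..<b}. q < k x \<and> (\<forall>d>0. \<exists>c e. c \<le> x \<and> x \<le> e \<and> c < e \<and> e - c < d \<and> G e - G c < p * (e - c))}"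
    (is "negligible ?Z")
proof (cases "0 < p")
  case False
  have "x \<notin> ?Z" for x
  proof
    assume "x \<in> ?Z"
    then have "\<exists>c e. c \<le> x \<and> x \<le> e \<and> c < e \<and> e - c < 1 \<and> G e - G c < p * (e - c)"
      by simp
    then obtain c e where "c < e" "G e - G c < p * (e - c)" by blast
    moreover have "G c < G e" using \<open>c < e\<close> by simp
    moreover have "p * (e - c) \<le> 0" using False \<open>c < e\<close> by (simp add: mult_nonpos_nonneg)
    ultimately show False by linarith
  qed
  then have Ze: "?Z = {}" by blast
  show ?thesis unfolding Ze by simp
next
  case True
  show ?thesis
  proof (rule negligible_by_cover)
    fix \<eta> :: real assume \<eta>: "\<eta> > 0"
    define B where "B = {x \<in> {a<..<b}. q < k x}"
    have Bb[measurable]: "B \<in> sets borel" unfolding B_def by measurable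
    define \<eta>' where "\<eta>' = \<eta> * (q - p) / p"
    have \<eta>': "\<eta>' > 0" using \<eta> pq True by (simp add: \<eta>'_def)
    obtain T where T: "open T" "B \<subseteq> T" "(T - B) \<in> lmeasurable" "emeasure lebesgue (T - B) < ennreal \<eta>'"
      using sets_lebesgue_outer_open[of B \<eta>'] Bb \<eta>' by auto
    define U0 where "U0 = T \<inter> {a<..<b}"
    have U0: "open U0" "B \<subseteq> U0" "U0 \<in> sets borel" using T by (auto simp: U0_def B_def)
    have U0B: "U0 \<subseteq> {a..b}" by (auto simp: U0_def)
    have TBb: "T - B \<in> sets borel" using T Bb by auto
    have "emeasure lborel (U0 - B) \<le> emeasure lborel (T - B)"
      using TBb by (intro emeasure_mono) (auto simp: U0_def)
    also have "\<dots> = emeasure lebesgue (T - B)" using TBb by (simp add: emeasure_completion)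
    finally have lD: "emeasure lborel (U0 - B) < ennreal \<eta>'" using T(4) by simp
    have Zsub: "?Z \<subseteq> U0" using U0 by (auto simp: B_def)
    obtain C where C: "countable C"
      "\<And>i. i \<in> C \<Longrightarrow> snd i > 0 \<and> cball (fst i) (snd i) \<subseteq> U0 \<and> G (fst i + snd i) - G (fst i - snd i) < p * ((fst i + snd i) - (fst i - snd i))"
      "disjoint_family_on (\<lambda>i. cball (fst i) (snd i)) C"
      "negligible (?Z - (\<Union>i\<in>C. cball (fst i) (snd i)))"
      by (rule vitali_intervals[OF U0(1) Zsub, of "\<lambda>c e. G e - G c < p * (e - c)"]) auto
    define W where "W = (\<Union>i\<in>C. cball (fst i) (snd i))"
    have Wb: "W \<in> sets borel" unfolding W_def using C(1) by (rule UN_cball_borel)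
    have WU0: "W \<subseteq> U0" using C(2) by (auto simp: W_def)
    have lW: "emeasure lborel W = (\<integral>\<^sup>+i. emeasure lborel (cball (fst i) (snd i)) \<partial>count_space C)"
      unfolding W_def by (rule sum_cballs[OF C(1) C(3)]) simp
    have nW: "emeasure nu W = (\<integral>\<^sup>+i. emeasure nu (cball (fst i) (snd i)) \<partial>count_space C)"
      unfolding W_def by (rule sum_cballs[OF C(1) C(3)]) simp
    have "emeasure nu W \<le> (\<integral>\<^sup>+i. ennreal p * emeasure lborel (cball (fst i) (snd i)) \<partial>count_space C)"
      unfolding nW
    proof (intro nn_integral_mono)
      fix i assume "i \<in> space (count_space C)"
      then have i: "i \<in> C" by simp
      then have "snd i > 0" using C(2) by blast
      moreover have le: "G (fst i + snd i) - G (fst i - snd i) \<le> p * (2 * snd i)"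
        using C(2)[OF i] by simp
      ultimately show "emeasure nu (cball (fst i) (snd i)) \<le> ennreal p * emeasure lborel (cball (fst i) (snd i))"
        using True pq
        by (simp add: cball_eq_atLeastAtMost emeasure_nu_Icc ennreal_leI[OF le] flip: ennreal_mult del: ennreal_mult)
    qed
    also have "\<dots> = ennreal p * emeasure lborel W"
      unfolding lW by (rule nn_integral_cmult) simp
    finally have ineq1: "emeasure nu W \<le> ennreal p * emeasure lborel W" .
    have WB: "W \<inter> B \<in> sets borel" using Wb Bb by auto
    have ineq2: "ennreal q * emeasure lborel (W \<inter> B) \<le> emeasure nu (W \<inter> B)"
      using WB by (rule nu_ge_k) (auto simp: B_def)
    have lWfin: "emeasure lborel W \<noteq> top" using WU0 U0B lborel_fin[of W a b] by auto
    have lWBfin: "emeasure lborel (W \<inter> B) \<noteq> top" using WU0 U0B lborel_fin[of "W \<inter> B" a b] by auto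
    have lDfin: "emeasure lborel (U0 - B) \<noteq> top" using U0B lborel_fin[of "U0 - B" a b] by auto
    have nWfin: "emeasure nu W \<noteq> top" using WU0 U0B Wb nu_fin[of W a b] by auto
    have nWBfin: "emeasure nu (W \<inter> B) \<noteq> top" using WU0 U0B WB nu_fin[of "W \<inter> B" a b] by auto
    note eqs = emeasure_eq_ennreal_measure[OF lWfin] emeasure_eq_ennreal_measure[OF lWBfin]
      emeasure_eq_ennreal_measure[OF nWfin] emeasure_eq_ennreal_measure[OF nWBfin]
      emeasure_eq_ennreal_measure[OF lDfin]
    have r1: "measure nu W \<le> p * measure lborel W"
      using ineq1 True unfolding eqs by (simp add: ennreal_mult[symmetric] ennreal_le_iff del: ennreal_mult)
    have r2: "q * measure lborel (W \<inter> B) \<le> measure nu (W \<inter> B)"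
      using ineq2 pq True unfolding eqs by (simp add: ennreal_mult[symmetric] ennreal_le_iff del: ennreal_mult)
    have r3: "measure nu (W \<inter> B) \<le> measure nu W"
      using nWfin Wb WB by (intro measure_mono_fmeasurable) (auto simp: fmeasurable_def less_top)
    have r4: "measure lborel W \<le> measure lborel (W \<inter> B) + measure lborel (U0 - B)"
    proof -
      have f: "emeasure lborel ((W \<inter> B) \<union> (U0 - B)) \<noteq> \<infinity>"
        by (rule lborel_fin[of _ a b]) (use U0B WU0 in auto)
      have "measure lborel W \<le> measure lborel ((W \<inter> B) \<union> (U0 - B))"
        using WU0 Wb WB U0 Bb f
        by (intro measure_mono_fmeasurable) (auto simp: fmeasurable_def less_top)
      also have "\<dots> \<le> measure lborel (W \<inter> B) + measure lborel (U0 - B)"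
        using WB U0 Bb lWBfin lDfin by (intro measure_subadditive) auto
      finally show ?thesis .
    qed
    have r5: "measure lborel (U0 - B) < \<eta>'"
      using lD unfolding eqs by (subst (asm) ennreal_less_iff) auto
    have r6: "p * measure lborel W \<le> p * measure lborel (W \<inter> B) + p * \<eta>'"
    proof -
      have "p * measure lborel W \<le> p * (measure lborel (W \<inter> B) + measure lborel (U0 - B))"
        using r4 True by (intro mult_left_mono) auto
      also have "\<dots> \<le> p * (measure lborel (W \<inter> B) + \<eta>')"
        using r5 True by (intro mult_left_mono) auto
      finally show ?thesis by (simp add: distrib_left)
    qed
    have "q * measure lborel (W \<inter> B) \<le> p * measure lborel (W \<inter> B) + p * \<eta>'"
      using r1 r2 r3 r6 by linarith
    moreover have e1: "(q - p) * measure lborel (W \<inter> B) = q * measure lborel (W \<inter> B) - p * measure lborel (W \<inter> B)"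
      by (rule left_diff_distrib)
    moreover have e2: "p * \<eta>' = (q - p) * \<eta>" using True by (simp add: \<eta>'_def)
    ultimately have "(q - p) * measure lborel (W \<inter> B) \<le> (q - p) * \<eta>"
      by linarith
    then have mW: "measure lborel (W \<inter> B) \<le> \<eta>"
      by (rule mult_left_le_imp_le) (use pq in simp)
    have eWl: "emeasure lborel (W \<inter> B) \<le> ennreal \<eta>"
      unfolding eqs using mW by (rule ennreal_leI)
    have negl: "negligible (?Z - W)" using C(4) unfolding W_def .
    have sub: "?Z \<subseteq> (W \<inter> B) \<union> (?Z - W)" by (auto simp: B_def)
    show "\<exists>W N. ?Z \<subseteq> W \<union> N \<and> negligible N \<and> W \<in> sets borel \<and> emeasure lborel W \<le> ennreal \<eta>"
      apply (rule exI[of _ "W \<inter> B"])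
      apply (rule exI[of _ "?Z - W"])
      using negl WB eWl sub by blast
  qed
qed

definition "ZU a b p q = {x \<in> {a<..<b}. k x < p \<and> (\<forall>d>0. \<exists>c e. c \<le> x \<and> x \<le> e \<and> c < e \<and> e - c < d \<and> q * (e - c) < G e - G c)}"
definition "ZL a b p q = {x \<in> {a<..<b}. q < k x \<and> (\<forall>d>0. \<exists>c e. c \<le> x \<and> x \<le> e \<and> c < e \<and> e - c < d \<and> G e - G c < p * (e - c))}"

lemma negligible_ZU: "p < q \<Longrightarrow> a \<le> b \<Longrightarrow> negligible (ZU a b p q)"
  unfolding ZU_def by (rule vitali_U)

lemma negligible_ZL: "p < q \<Longrightarrow> a \<le> b \<Longrightarrow> negligible (ZL a b p q)"
  unfolding ZL_def by (rule vitali_L)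

lemma good_point:
  assumes x: "x \<in> {a<..<b}"
   and notU: "\<And>p q. p \<in> \<rat> \<Longrightarrow> q \<in> \<rat> \<Longrightarrow> p < q \<Longrightarrow> x \<notin> ZU a b p q"
   and notL: "\<And>p q. p \<in> \<rat> \<Longrightarrow> q \<in> \<rat> \<Longrightarrow> p < q \<Longrightarrow> x \<notin> ZL a b p q"
  shows "(G has_real_derivative k x) (at x)"
proof (rule deriv_from_intervals)
  fix \<epsilon> :: real assume \<epsilon>: "\<epsilon> > 0"
  obtain p where p: "p \<in> \<rat>" "k x < p" "p < k x + \<epsilon>/2"
    using Rats_dense_in_real[of "k x" "k x + \<epsilon>/2"] \<epsilon> by auto
  obtain q where q: "q \<in> \<rat>" "p < q" "q < k x + \<epsilon>"
    using Rats_dense_in_real[of p "k x + \<epsilon>"] p \<epsilon> by auto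
  have "x \<notin> ZU a b p q" using notU p q by blast
  then have "\<not> (\<forall>d>0. \<exists>c e. c \<le> x \<and> x \<le> e \<and> c < e \<and> e - c < d \<and> q * (e - c) < G e - G c)"
    using x p(2) unfolding ZU_def by blast
  then obtain d1 where d1: "d1 > 0" "\<And>c e. c \<le> x \<Longrightarrow> x \<le> e \<Longrightarrow> c < e \<Longrightarrow> e - c < d1 \<Longrightarrow> G e - G c \<le> q * (e - c)"
    by (meson not_less)
  obtain q' where q': "q' \<in> \<rat>" "k x - \<epsilon>/2 < q'" "q' < k x"
    using Rats_dense_in_real[of "k x - \<epsilon>/2" "k x"] \<epsilon> by auto
  obtain p' where p': "p' \<in> \<rat>" "k x - \<epsilon> < p'" "p' < q'"
    using Rats_dense_in_real[of "k x - \<epsilon>" q'] q' \<epsilon> by auto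
  have "x \<notin> ZL a b p' q'" using notL p' q' by blast
  then have "\<not> (\<forall>d>0. \<exists>c e. c \<le> x \<and> x \<le> e \<and> c < e \<and> e - c < d \<and> G e - G c < p' * (e - c))"
    using x q'(3) unfolding ZL_def by blast
  then obtain d2 where d2: "d2 > 0" "\<And>c e. c \<le> x \<Longrightarrow> x \<le> e \<Longrightarrow> c < e \<Longrightarrow> e - c < d2 \<Longrightarrow> p' * (e - c) \<le> G e - G c"
    by (meson not_less)
  show "\<exists>\<delta>>0. \<forall>c e. c \<le> x \<longrightarrow> x \<le> e \<longrightarrow> c < e \<longrightarrow> e - c < \<delta> \<longrightarrow>
              \<bar>(G e - G c) - k x * (e - c)\<bar> \<le> \<epsilon> * (e - c)"
  proof (intro exI[of _ "min d1 d2"] conjI allI impI)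
    fix c e assume ce: "c \<le> x" "x \<le> e" "c < e" "e - c < min d1 d2"
    define w where "w = e - c"
    have w: "w > 0" using ce by (simp add: w_def)
    have u: "G e - G c \<le> q * w" using d1(2)[of c e] ce by (simp add: w_def)
    have l: "p' * w \<le> G e - G c" using d2(2)[of c e] ce by (simp add: w_def)
    have "q * w \<le> (k x + \<epsilon>) * w" using q w by (intro mult_right_mono) auto
    moreover have "(k x - \<epsilon>) * w \<le> p' * w" using p' w by (intro mult_right_mono) auto
    ultimately have "G e - G c \<le> k x * w + \<epsilon> * w" "k x * w - \<epsilon> * w \<le> G e - G c"
      using u l by (simp_all add: algebra_simps)
    then show "\<bar>(G e - G c) - k x * (e - c)\<bar> \<le> \<epsilon> * (e - c)"
      unfolding w_def[symmetric] by linarith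
  qed (use d1 d2 in auto)
qed

lemma G_deriv_ae: "AE x in lebesgue. (G has_real_derivative k x) (at x)"
proof -
  define F where "F n p q = (if p < q then ZU (-real n) (real n) p q \<union> ZL (-real n) (real n) p q else {})"
    for n :: nat and p q :: real
  have F1: "negligible (F n p q)" for n p q
    unfolding F_def by (cases "p < q") (simp_all add: negligible_Un negligible_ZU negligible_ZL)
  have F2: "negligible (\<Union>q\<in>\<rat>. F n p q)" for n p
    by (rule negligible_countable_Union) (auto simp: F1 countable_rat)
  have F3: "negligible (\<Union>p\<in>\<rat>. \<Union>q\<in>\<rat>. F n p q)" for n
    by (rule negligible_countable_Union) (auto simp: F2 countable_rat)
  define N where "N = (\<Union>n::nat. \<Union>p\<in>\<rat>. \<Union>q\<in>\<rat>. F n p q)"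
  have "negligible N"
    unfolding N_def by (rule negligible_Union_nat) (rule F3)
  then have "N \<in> null_sets lebesgue" by (simp add: negligible_iff_null_sets)
  then show ?thesis
  proof (rule AE_I')
    show "{x \<in> space lebesgue. \<not> (G has_real_derivative k x) (at x)} \<subseteq> N"
    proof (intro subsetI, rule ccontr)
      fix x assume x: "x \<in> {x \<in> space lebesgue. \<not> (G has_real_derivative k x) (at x)}" and xN: "x \<notin> N"
      obtain n :: nat where n: "\<bar>x\<bar> < real n" using reals_Archimedean2 by blast
      have xn: "x \<in> {-real n<..<real n}" using n by auto
      have nF: "x \<notin> F n p q" if "p \<in> \<rat>" "q \<in> \<rat>" for p q
        using xN that unfolding N_def by blast
      have "(G has_real_derivative k x) (at x)"
      proof (rule good_point[OF xn])
        fix p q :: real assume "p \<in> \<rat>" "q \<in> \<rat>" "p < q"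
        then show "x \<notin> ZU (-real n) (real n) p q" "x \<notin> ZL (-real n) (real n) p q"
          using nF[of p q] unfolding F_def by auto
      qed
      then show False using x by simp
    qed
  qed
qed

end

lemma deriv_nonneg_right:
  fixes f :: "real \<Rightarrow> real"
  assumes D: "(f has_real_derivative D) (at x)" and e: "e > 0"
    and mono: "\<And>y. x < y \<Longrightarrow> y < x + e \<Longrightarrow> f x \<le> f y"
  shows "0 \<le> D"
proof -
  have "((\<lambda>h. (f (x + h) - f x) / h) \<longlongrightarrow> D) (at 0)"
    using D by (simp add: DERIV_def)
  then have lim: "((\<lambda>h. (f (x + h) - f x) / h) \<longlongrightarrow> D) (at_right 0)"
    by (rule tendsto_mono[rotated]) (simp add: at_le)
  have ev: "eventually (\<lambda>h. 0 \<le> (f (x + h) - f x) / h) (at_right 0)"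
    unfolding eventually_at_right_field
    by (intro exI[of _ e]) (use e mono in auto)
  show ?thesis
    by (rule tendsto_lowerbound[OF lim ev]) simp
qed

lemma deriv_nonpos_right:
  fixes f :: "real \<Rightarrow> real"
  assumes D: "(f has_real_derivative D) (at x)" and e: "e > 0"
    and anti: "\<And>y. x < y \<Longrightarrow> y < x + e \<Longrightarrow> f y \<le> f x"
  shows "D \<le> 0"
proof -
  have "((\<lambda>t. - f t) has_real_derivative - D) (at x)" using D by (rule DERIV_minus)
  then have "0 \<le> - D" by (rule deriv_nonneg_right[OF _ e]) (use anti in auto)
  then show ?thesis by simp
qed

lemma deriv_abs_le:
  fixes f :: "real \<Rightarrow> real"
  assumes D: "(f has_real_derivative D) (at x)" and e: "e > 0"
    and lip: "\<And>y. \<bar>y - x\<bar> < e \<Longrightarrow> \<bar>f y - f x\<bar> \<le> L * \<bar>y - x\<bar>"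
  shows "\<bar>D\<bar> \<le> L"
proof -
  have "((\<lambda>h. (f (x + h) - f x) / h) \<longlongrightarrow> D) (at 0)"
    using D by (simp add: DERIV_def)
  then have lim: "((\<lambda>h. \<bar>(f (x + h) - f x) / h\<bar>) \<longlongrightarrow> \<bar>D\<bar>) (at 0)"
    by (rule tendsto_rabs)
  have *: "\<bar>(f (x + h) - f x) / h\<bar> \<le> L" if h: "h \<noteq> 0" "dist h 0 < e" for h
  proof -
    have "\<bar>f (x + h) - f x\<bar> \<le> L * \<bar>h\<bar>" using lip[of "x + h"] h by (simp add: dist_real_def)
    then show ?thesis using h by (simp add: abs_divide divide_le_eq)
  qed
  have ev: "eventually (\<lambda>h. \<bar>(f (x + h) - f x) / h\<bar> \<le> L) (at 0)"
    unfolding eventually_at using e * by blast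
  show ?thesis
    by (rule tendsto_upperbound[OF lim ev]) simp
qed

lemma mono_lip_deriv:
  fixes f :: "real \<Rightarrow> real"
  assumes ab: "a < b"
    and mono: "\<And>x y. a \<le> x \<Longrightarrow> x \<le> y \<Longrightarrow> y \<le> b \<Longrightarrow> f x \<le> f y"
    and lip: "\<And>x y. a \<le> x \<Longrightarrow> x \<le> b \<Longrightarrow> a \<le> y \<Longrightarrow> y \<le> b \<Longrightarrow> \<bar>f y - f x\<bar> \<le> L * \<bar>y - x\<bar>"
  obtains h where "h \<in> borel_measurable borel" "\<And>x. 0 \<le> h x" "\<And>x. h x \<le> L"
    "AE x in lebesgue. x \<in> {a<..<b} \<longrightarrow> (f has_real_derivative h x) (at x)"
    "\<And>c d. a \<le> c \<Longrightarrow> c \<le> d \<Longrightarrow> d \<le> b \<Longrightarrow> (h has_integral (f d - f c)) {c..d}"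
proof -
  have L0: "0 \<le> L"
  proof -
    have "\<bar>f b - f a\<bar> \<le> L * \<bar>b - a\<bar>" using lip[of a b] ab by simp
    then have "0 \<le> L * (b - a)" using ab by simp
    then show ?thesis using ab by (simp add: zero_le_mult_iff)
  qed
  define cl where "cl t = max a (min b t)" for t
  have cl_in: "a \<le> cl t" "cl t \<le> b" for t using ab by (auto simp: cl_def)
  have cl_mono: "x \<le> y \<Longrightarrow> cl x \<le> cl y" for x y by (auto simp: cl_def)
  have cl_lip: "\<bar>cl y - cl x\<bar> \<le> \<bar>y - x\<bar>" for x y by (auto simp: cl_def)
  have cl_id: "a \<le> t \<Longrightarrow> t \<le> b \<Longrightarrow> cl t = t" for t by (auto simp: cl_def)
  define F where "F t = f (cl t)" for t
  define G where "G t = F t + t" for t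
  have F_mono: "x \<le> y \<Longrightarrow> F x \<le> F y" for x y
    unfolding F_def using cl_in cl_mono by (intro mono) auto
  have F_lip: "\<bar>F y - F x\<bar> \<le> L * \<bar>y - x\<bar>" for x y
  proof -
    have "\<bar>F y - F x\<bar> \<le> L * \<bar>cl y - cl x\<bar>" unfolding F_def using cl_in by (intro lip) auto
    also have "\<dots> \<le> L * \<bar>y - x\<bar>" using L0 cl_lip by (intro mult_left_mono) auto
    finally show ?thesis .
  qed
  have F_bnd: "f a \<le> F t" "F t \<le> f b" for t
    unfolding F_def using cl_in ab by (auto intro: mono)
  have G_strict: "x < y \<Longrightarrow> G x < G y" for x y
    using F_mono[of x y] by (simp add: G_def)
  have G_lip: "\<bar>G y - G x\<bar> \<le> (L + 1) * \<bar>y - x\<bar>" for x y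
  proof -
    have "\<bar>G y - G x\<bar> \<le> \<bar>F y - F x\<bar> + \<bar>y - x\<bar>" by (simp add: G_def)
    then show ?thesis using F_lip[of y x] by (simp add: algebra_simps)
  qed
  have G_cont: "continuous_on UNIV G"
  proof (rule lipschitz_on_continuous_on)
    show "(L + 1)-lipschitz_on UNIV G"
      using L0 G_lip by (intro lipschitz_onI) (auto simp: dist_real_def abs_minus_commute)
  qed
  have G_surj: "surj G"
  proof -
    have "y \<in> range G" for y
    proof -
      define t1 where "t1 = y - f b - 1"
      define t2 where "t2 = y - f a + 1"
      have "G t1 \<le> y" using F_bnd(2)[of t1] by (simp add: G_def t1_def)
      moreover have "y \<le> G t2" using F_bnd(1)[of t2] by (simp add: G_def t2_def)
      moreover have "t1 \<le> t2" using mono[of a b] ab by (simp add: t1_def t2_def)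
      ultimately obtain t where "G t = y"
        using IVT'[of G t1 y t2] G_cont continuous_on_subset by blast
      then show ?thesis by auto
    qed
    then show ?thesis by auto
  qed
  interpret Gfun G "L + 1"
    by unfold_locales (use G_strict G_lip G_surj in auto)
  define h where "h x = max 0 (min L (k x - 1))" for x
  have hb: "h \<in> borel_measurable borel" unfolding h_def by measurable
  have AE1: "AE x in lebesgue. x \<in> {a<..<b} \<longrightarrow> (f has_real_derivative (k x - 1)) (at x) \<and> h x = k x - 1"
    using G_deriv_ae
  proof eventually_elim
    case (elim x)
    show ?case
    proof
      assume x: "x \<in> {a<..<b}"
      have "((\<lambda>t. G t - t) has_real_derivative (k x - 1)) (at x)"
        using elim by (intro derivative_eq_intros) auto
      then have df: "(f has_real_derivative (k x - 1)) (at x)"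
        by (rule has_field_derivative_transform_within_open[of _ _ _ "{a<..<b}"])
           (use x in \<open>auto simp: G_def F_def cl_id\<close>)
      define e where "e = min (x - a) (b - x)"
      have e: "e > 0" using x by (simp add: e_def)
      have "0 \<le> k x - 1"
        by (rule deriv_nonneg_right[OF df e]) (use x in \<open>auto simp: e_def intro!: mono\<close>)
      moreover have "\<bar>k x - 1\<bar> \<le> L"
        by (rule deriv_abs_le[OF df e]) (use x in \<open>auto simp: e_def intro!: lip\<close>)
      ultimately have "h x = k x - 1" by (simp add: h_def)
      then show "(f has_real_derivative (k x - 1)) (at x) \<and> h x = k x - 1" using df by simp
    qed
  qed
  then obtain N where N0: "{x \<in> space lebesgue. \<not> (x \<in> {a<..<b} \<longrightarrow> (f has_real_derivative (k x - 1)) (at x) \<and> h x = k x - 1)} \<subseteq> N"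
    "emeasure lebesgue N = 0" "N \<in> sets lebesgue"
    by (rule AE_E)
  have N: "{x \<in> space lebesgue. \<not> (x \<in> {a<..<b} \<longrightarrow> (f has_real_derivative (k x - 1)) (at x) \<and> h x = k x - 1)} \<subseteq> N"
    "N \<in> null_sets lebesgue"
    using N0 by (auto intro: null_setsI)
  have negN: "negligible (N \<union> {a, b})"
    using N(2) by (simp add: negligible_iff_null_sets negligible_insert)
  show ?thesis
  proof (rule that[OF hb])
    show "0 \<le> h x" "h x \<le> L" for x using L0 by (auto simp: h_def)
    show "AE x in lebesgue. x \<in> {a<..<b} \<longrightarrow> (f has_real_derivative h x) (at x)"
      using AE1 by eventually_elim auto
    fix c d assume cd: "a \<le> c" "c \<le> d" "d \<le> b"
    have "(k has_integral (G d - G c)) {c..d}" using cd by (intro k_integral) simp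
    then have "((\<lambda>x. k x - 1) has_integral ((G d - G c) - (d - c))) {c..d}"
      using has_integral_const_real[of "1::real" c d] cd by (intro has_integral_diff) auto
    moreover have "(G d - G c) - (d - c) = f d - f c"
      using cd ab by (simp add: G_def F_def cl_id)
    ultimately have I: "((\<lambda>x. k x - 1) has_integral (f d - f c)) {c..d}" by simp
    show "(h has_integral (f d - f c)) {c..d}"
    proof (rule has_integral_spike[OF negN _ I])
      fix x assume "x \<in> {c..d} - (N \<union> {a, b})"
      then have "x \<in> {a<..<b}" "x \<notin> N" using cd by auto
      then show "h x = k x - 1" using N(1) by auto
    qed
  qed
qed

locale LSL =
  fixes \<delta> :: "real \<Rightarrow> real"
  assumes dLSL: "\<delta> \<in> diagonals_LSL"
begin

definition g where "g v = \<delta> v / v"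

lemma d_nonneg: "0 \<le> u \<Longrightarrow> u \<le> 1 \<Longrightarrow> 0 \<le> \<delta> u"
  using dLSL by (auto simp: diagonals_LSL_def diagonals_def)

lemma d_le: "0 \<le> u \<Longrightarrow> u \<le> 1 \<Longrightarrow> \<delta> u \<le> u"
  using dLSL by (auto simp: diagonals_LSL_def diagonals_def)

lemma d_one: "\<delta> 1 = 1"
  using dLSL by (auto simp: diagonals_LSL_def diagonals_def)

lemma d_lip: "0 \<le> u \<Longrightarrow> u \<le> 1 \<Longrightarrow> 0 \<le> v \<Longrightarrow> v \<le> 1 \<Longrightarrow> \<bar>\<delta> v - \<delta> u\<bar> \<le> 2 * \<bar>v - u\<bar>"
  using dLSL by (auto simp: diagonals_LSL_def diagonals_def)

lemma g_mono: "0 < u \<Longrightarrow> u \<le> v \<Longrightarrow> v \<le> 1 \<Longrightarrow> g u \<le> g v"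
  using dLSL unfolding diagonals_LSL_def g_def by auto

lemma g_anti: "0 < u \<Longrightarrow> u \<le> v \<Longrightarrow> v \<le> 1 \<Longrightarrow> g v / v \<le> g u / u"
proof -
  assume a: "0 < u" "u \<le> v" "v \<le> 1"
  then have "\<delta> v / v^2 \<le> \<delta> u / u^2"
    using dLSL unfolding diagonals_LSL_def by auto
  then show ?thesis by (simp add: g_def power2_eq_square)
qed

lemma g_nonneg: "0 \<le> u \<Longrightarrow> u \<le> 1 \<Longrightarrow> 0 \<le> g u"
  using d_nonneg by (simp add: g_def)

lemma g_le1: "0 \<le> u \<Longrightarrow> u \<le> 1 \<Longrightarrow> g u \<le> 1"
  using d_le[of u] by (cases "u = 0") (auto simp: g_def divide_le_eq)

lemma g_lip:
  assumes c: "0 < c" and uv: "c \<le> u" "u \<le> 1" "c \<le> v" "v \<le> 1"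
  shows "\<bar>g v - g u\<bar> \<le> (3 / c) * \<bar>v - u\<bar>"
proof -
  have u0: "u > 0" and v0: "v > 0" using c uv by auto
  have eq: "g v - g u = (u * (\<delta> v - \<delta> u) + (u - v) * \<delta> u) / (u * v)"
    using u0 v0 by (simp add: g_def field_simps)
  have "\<bar>u * (\<delta> v - \<delta> u) + (u - v) * \<delta> u\<bar> \<le> u * (2 * \<bar>v - u\<bar>) + \<bar>v - u\<bar> * u"
  proof -
    have "\<bar>u * (\<delta> v - \<delta> u)\<bar> \<le> u * (2 * \<bar>v - u\<bar>)"
      using d_lip[of u v] u0 v0 uv by (simp add: abs_mult)
    moreover have "\<bar>(u - v) * \<delta> u\<bar> \<le> \<bar>v - u\<bar> * u"
      using d_nonneg[of u] d_le[of u] u0 uv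
      by (simp add: abs_mult abs_minus_commute mult_left_mono)
    ultimately show ?thesis by (smt (verit) abs_triangle_ineq)
  qed
  also have "\<dots> = 3 * u * \<bar>v - u\<bar>" by (simp add: algebra_simps)
  finally have "\<bar>u * (\<delta> v - \<delta> u) + (u - v) * \<delta> u\<bar> / (u * v) \<le> 3 * u * \<bar>v - u\<bar> / (u * v)"
    by (rule divide_right_mono) (use u0 v0 in auto)
  then have "\<bar>g v - g u\<bar> \<le> 3 * u * \<bar>v - u\<bar> / (u * v)"
    unfolding eq using u0 v0 by (simp add: abs_divide)
  also have "\<dots> = 3 * \<bar>v - u\<bar> / v" using u0 by simp
  also have "\<dots> \<le> 3 * \<bar>v - u\<bar> / c" using c uv by (intro divide_left_mono) auto
  finally show ?thesis by simp
qed

lemma g_on: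
  assumes c: "0 < c" "c < 1"
  obtains h where "h \<in> borel_measurable borel" "\<And>x. 0 \<le> h x" "\<And>x. h x \<le> 3 / c"
    "AE x in lebesgue. x \<in> {c<..<1} \<longrightarrow> (g has_real_derivative h x) (at x) \<and> deriv g x = h x"
    "\<And>u v. c \<le> u \<Longrightarrow> u \<le> v \<Longrightarrow> v \<le> 1 \<Longrightarrow> (h has_integral (g v - g u)) {u..v}"
proof -
  obtain h where h: "h \<in> borel_measurable borel" "\<And>x. 0 \<le> h x" "\<And>x. h x \<le> 3 / c"
    "AE x in lebesgue. x \<in> {c<..<1} \<longrightarrow> (g has_real_derivative h x) (at x)"
    "\<And>u v. c \<le> u \<Longrightarrow> u \<le> v \<Longrightarrow> v \<le> 1 \<Longrightarrow> (h has_integral (g v - g u)) {u..v}"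
    by (rule mono_lip_deriv[of c 1 g "3 / c"]) (use c g_mono g_lip in auto)
  show ?thesis
  proof (rule that[OF h(1,2,3) _ h(5)])
    show "AE x in lebesgue. x \<in> {c<..<1} \<longrightarrow> (g has_real_derivative h x) (at x) \<and> deriv g x = h x"
      using h(4) by eventually_elim (auto intro: DERIV_imp_deriv)
  qed auto
qed

lemma AE_diff_g: "AE s in lebesgue. s \<in> {0<..<1} \<longrightarrow> g differentiable (at s)"
proof -
  have each: "AE s in lebesgue. s \<in> {1 / real (Suc (Suc n))<..<1} \<longrightarrow> g differentiable (at s)" for n
  proof -
    have c: "0 < 1 / real (Suc (Suc n))" "1 / real (Suc (Suc n)) < 1" by auto
    obtain h where "AE x in lebesgue. x \<in> {1 / real (Suc (Suc n))<..<1} \<longrightarrow> (g has_real_derivative h x) (at x) \<and> deriv g x = h x"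
      by (rule g_on[OF c]) blast
    then show ?thesis by eventually_elim (auto simp: real_differentiable_def)
  qed
  then have "AE s in lebesgue. \<forall>n. s \<in> {1 / real (Suc (Suc n))<..<1} \<longrightarrow> g differentiable (at s)"
    using AE_all_countable[where M=lebesgue and P="\<lambda>n s. s \<in> {1 / real (Suc (Suc n))<..<1} \<longrightarrow> g differentiable (at s)"] each
    by blast
  then show ?thesis
  proof eventually_elim
    case (elim s)
    show ?case
    proof
      assume s: "s \<in> {0<..<1}"
      obtain n where n: "inverse (real (Suc n)) < s" using s reals_Archimedean by auto
      have "1 / real (Suc (Suc n)) \<le> 1 / real (Suc n)"
        by (rule divide_left_mono) auto
      then have "1 / real (Suc (Suc n)) < s"
        using n by (simp add: inverse_eq_divide)
      then show "g differentiable (at s)" using elim s by auto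
    qed
  qed
qed

lemma AE_deriv_g: "AE s in lebesgue. s \<in> {0<..<1} \<longrightarrow>
    (g has_real_derivative deriv g s) (at s) \<and> 0 \<le> deriv g s \<and> deriv g s \<le> g s / s"
  using AE_diff_g
proof eventually_elim
  case (elim s)
  show ?case
  proof
    assume s: "s \<in> {0<..<1}"
    then have D: "(g has_real_derivative deriv g s) (at s)"
      using elim by (simp add: DERIV_deriv_iff_real_differentiable)
    have e: "1 - s > 0" using s by simp
    have nn: "0 \<le> deriv g s"
      by (rule deriv_nonneg_right[OF D e]) (use s in \<open>auto intro!: g_mono\<close>)
    have Q: "((\<lambda>t. g t / t) has_real_derivative (deriv g s * s - g s * 1) / (s * s)) (at s)"
      using D s by (intro DERIV_divide DERIV_ident) auto
    have q0: "(deriv g s * s - g s * 1) / (s * s) \<le> 0"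
      by (rule deriv_nonpos_right[OF Q e]) (use s in \<open>auto intro!: g_anti\<close>)
    have ss: "0 < s * s" using s by simp
    have "deriv g s * s - g s * 1 \<le> 0"
      using q0 ss by (auto simp: divide_le_0_iff)
    then have "deriv g s * s \<le> g s"
      by simp
    then have "deriv g s \<le> g s / s" using s by (simp add: le_divide_eq)
    then show "(g has_real_derivative deriv g s) (at s) \<and> 0 \<le> deriv g s \<and> deriv g s \<le> g s / s"
      using D nn by simp
  qed
qed

lemma dA:
  "AE s in lebesgue. s \<in> {0<..<1} \<longrightarrow> s \<noteq> x \<longrightarrow>
     deriv (\<lambda>t. S_delta \<delta> x t) s = (if s < x then g x else x * deriv g s)"
  using AE_deriv_g
proof eventually_elim
  case (elim s)
  show ?case
  proof (intro impI)
    assume s: "s \<in> {0<..<1}" "s \<noteq> x"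
    show "deriv (\<lambda>t. S_delta \<delta> x t) s = (if s < x then g x else x * deriv g s)"
    proof (cases "s < x")
      case True
      have "((\<lambda>t. t * g x) has_real_derivative g x) (at s)" by (auto intro!: derivative_eq_intros)
      then have "((\<lambda>t. S_delta \<delta> x t) has_real_derivative g x) (at s)"
        by (rule has_field_derivative_transform_within_open[of _ _ _ "{..<x}"])
           (use True in \<open>auto simp: S_delta_def g_def\<close>)
      then show ?thesis using True by (simp add: DERIV_imp_deriv)
    next
      case False
      then have xs: "x < s" using s by auto
      have "(g has_real_derivative deriv g s) (at s)" using elim s by auto
      then have "((\<lambda>t. x * g t) has_real_derivative x * deriv g s) (at s)" by (rule DERIV_cmult)
      then have "((\<lambda>t. S_delta \<delta> x t) has_real_derivative x * deriv g s) (at s)"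
        by (rule has_field_derivative_transform_within_open[of _ _ _ "{x<..}"])
           (use xs in \<open>auto simp: S_delta_def g_def\<close>)
      then show ?thesis using False by (simp add: DERIV_imp_deriv)
    qed
  qed
qed

lemma dB:
  "AE s in lebesgue. s \<in> {0<..<1} \<longrightarrow> s \<noteq> y \<longrightarrow>
     deriv (\<lambda>t. S_delta \<delta> t y) s = (if s < y then g y else y * deriv g s)"
  using AE_deriv_g
proof eventually_elim
  case (elim s)
  show ?case
  proof (intro impI)
    assume s: "s \<in> {0<..<1}" "s \<noteq> y"
    show "deriv (\<lambda>t. S_delta \<delta> t y) s = (if s < y then g y else y * deriv g s)"
    proof (cases "s < y")
      case True
      have "((\<lambda>t. t * g y) has_real_derivative g y) (at s)" by (auto intro!: derivative_eq_intros)
      then have "((\<lambda>t. S_delta \<delta> t y) has_real_derivative g y) (at s)"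
        by (rule has_field_derivative_transform_within_open[of _ _ _ "{..<y}"])
           (use True in \<open>auto simp: S_delta_def g_def\<close>)
      then show ?thesis using True by (simp add: DERIV_imp_deriv)
    next
      case False
      then have ys: "y < s" using s by auto
      have "(g has_real_derivative deriv g s) (at s)" using elim s by auto
      then have "((\<lambda>t. y * g t) has_real_derivative y * deriv g s) (at s)" by (rule DERIV_cmult)
      then have "((\<lambda>t. S_delta \<delta> t y) has_real_derivative y * deriv g s) (at s)"
        by (rule has_field_derivative_transform_within_open[of _ _ _ "{y<..}"])
           (use ys in \<open>auto simp: S_delta_def g_def\<close>)
      then show ?thesis using False by (simp add: DERIV_imp_deriv)
    qed
  qed
qed

end

lemma LINT_eq_integral:
  fixes f :: "real \<Rightarrow> real"
  assumes f: "f absolutely_integrable_on S" and S: "S \<in> sets lebesgue"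
  shows "integrable (lebesgue_on S) f" "(LINT x|lebesgue_on S. f x) = integral S f"
proof -
  show i: "integrable (lebesgue_on S) f"
    using f S by (simp add: integrable_restrict_space set_integrable_def)
  show "(LINT x|lebesgue_on S. f x) = integral S f"
    using i S by (rule lebesgue_integral_eq_integral)
qed

lemma borel_to_lebesgue_on:
  fixes f :: "real \<Rightarrow> real"
  assumes "f \<in> borel_measurable borel"
  shows "f \<in> borel_measurable (lebesgue_on S)"
  using assms by (intro measurable_restrict_space1 measurable_completion) simp

lemma bounded_abs_int:
  fixes f :: "real \<Rightarrow> real"
  assumes "f \<in> borel_measurable borel" "\<And>x. x \<in> {a..b} \<Longrightarrow> \<bar>f x\<bar> \<le> K"
  shows "f absolutely_integrable_on {a..b}"
  by (rule measurable_bounded_by_integrable_imp_absolutely_integrable[where g="\<lambda>_. K"])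
     (use assms in \<open>auto intro: borel_to_lebesgue_on\<close>)

lemma AE_negl:
  assumes "AE x in lebesgue. P x"
  obtains N where "negligible N" "\<And>x. x \<notin> N \<Longrightarrow> P x"
proof -
  obtain N where N: "{x \<in> space lebesgue. \<not> P x} \<subseteq> N" "emeasure lebesgue N = 0" "N \<in> sets lebesgue"
    using assms by (rule AE_E)
  then have "negligible N" by (simp add: negligible_iff_null_sets null_setsI)
  then show ?thesis using N(1) that by auto
qed

lemma (in LSL) g_eq: "g = (\<lambda>v. \<delta> v / v)"
  by (rule ext) (simp add: g_def)

locale LSL2 = d1: LSL \<delta>1 + d2: LSL \<delta>2 for \<delta>1 \<delta>2
begin

definition psi where "psi x y s = deriv (\<lambda>t. S_delta \<delta>1 x t) s * deriv (\<lambda>t. S_delta \<delta>2 t y) s"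

lemma star_psi: "star (S_delta \<delta>1) (S_delta \<delta>2) x y = (LINT s|lebesgue_on {0..1}. psi x y s)"
  by (simp add: star_def psi_def)

lemma psi_x0: "psi 0 y s = 0"
proof -
  have "(\<lambda>t. S_delta \<delta>1 0 t) = (\<lambda>t. 0)" by (rule ext) (simp add: S_delta_def)
  then show ?thesis by (simp add: psi_def DERIV_imp_deriv[OF DERIV_const])
qed

lemma psi_y0: "psi x 0 s = 0"
proof -
  have "(\<lambda>t. S_delta \<delta>2 t 0) = (\<lambda>t. 0)" by (rule ext) (simp add: S_delta_def)
  then show ?thesis by (simp add: psi_def DERIV_imp_deriv[OF DERIV_const])
qed

definition J where "J z = (LINT u|lebesgue_on {z..1}. deriv (\<lambda>v. \<delta>1 v / v) u * deriv (\<lambda>v. \<delta>2 v / v) u)"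


lemma main_calc:
  assumes x: "0 < x" "x \<le> 1" and y: "0 < y" "y \<le> 1"
  shows "psi x y absolutely_integrable_on {0..1} \<and>
    integral {0..1} (psi x y) = (if x < y then x / y^2 * \<delta>1 y * \<delta>2 y + x * y * J y
                                 else y / x^2 * \<delta>1 x * \<delta>2 x + x * y * J x)"
proof -
  define c where "c = min x y / 2"
  have c: "0 < c" "c < 1" "c < x" "c < y" using x y by (auto simp: c_def)
  obtain h1 where h1: "h1 \<in> borel_measurable borel" "\<And>s. 0 \<le> h1 s" "\<And>s. h1 s \<le> 3 / c"
    "AE s in lebesgue. s \<in> {c<..<1} \<longrightarrow> (d1.g has_real_derivative h1 s) (at s) \<and> deriv d1.g s = h1 s"
    "\<And>u v. c \<le> u \<Longrightarrow> u \<le> v \<Longrightarrow> v \<le> 1 \<Longrightarrow> (h1 has_integral (d1.g v - d1.g u)) {u..v}"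
    by (rule d1.g_on[OF c(1,2)]) blast
  obtain h2 where h2: "h2 \<in> borel_measurable borel" "\<And>s. 0 \<le> h2 s" "\<And>s. h2 s \<le> 3 / c"
    "AE s in lebesgue. s \<in> {c<..<1} \<longrightarrow> (d2.g has_real_derivative h2 s) (at s) \<and> deriv d2.g s = h2 s"
    "\<And>u v. c \<le> u \<Longrightarrow> u \<le> v \<Longrightarrow> v \<le> 1 \<Longrightarrow> (h2 has_integral (d2.g v - d2.g u)) {u..v}"
    by (rule d2.g_on[OF c(1,2)]) blast
  define psi' where "psi' s = (if s < x then d1.g x else x * h1 s) * (if s < y then d2.g y else y * h2 s)" for s
  have AE: "AE s in lebesgue. (s \<in> {0<..<1} \<longrightarrow> s \<noteq> x \<longrightarrow> s \<noteq> y \<longrightarrow> psi x y s = psi' s) \<and>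
      (s \<in> {c<..<1} \<longrightarrow> deriv d1.g s = h1 s \<and> deriv d2.g s = h2 s)"
    using d1.dA[of x] d2.dB[of y] h1(4) h2(4)
  proof eventually_elim
    case (elim s)
    show ?case
    proof (intro conjI impI)
      assume s: "s \<in> {0<..<1}" "s \<noteq> x" "s \<noteq> y"
      have A: "deriv (\<lambda>t. S_delta \<delta>1 x t) s = (if s < x then d1.g x else x * h1 s)"
        using elim s c by auto
      have B: "deriv (\<lambda>t. S_delta \<delta>2 t y) s = (if s < y then d2.g y else y * h2 s)"
        using elim s c by auto
      show "psi x y s = psi' s" unfolding psi_def psi'_def A B ..
    next
      assume "s \<in> {c<..<1}"
      then show "deriv d1.g s = h1 s" "deriv d2.g s = h2 s" using elim by auto
    qed
  qed
  obtain N0 where N0: "negligible N0" "\<And>s. s \<notin> N0 \<Longrightarrow> (s \<in> {0<..<1} \<longrightarrow> s \<noteq> x \<longrightarrow> s \<noteq> y \<longrightarrow> psi x y s = psi' s) \<and>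
      (s \<in> {c<..<1} \<longrightarrow> deriv d1.g s = h1 s \<and> deriv d2.g s = h2 s)"
    by (rule AE_negl[OF AE]) blast
  define N where "N = N0 \<union> {0, 1, x, y}"
  have negN: "negligible N" using N0(1) by (auto simp: N_def)
  have eq: "psi x y s = psi' s" if "s \<in> {0..1} - N" for s
    using N0(2)[of s] that by (auto simp: N_def)
  have eqd: "deriv d1.g s * deriv d2.g s = h1 s * h2 s" if "c < z" "s \<in> {z..1} - N" for s z
    using N0(2)[of s] that by (auto simp: N_def)
  have psi'b: "psi' \<in> borel_measurable borel" unfolding psi'_def using h1(1) h2(1) by measurable
  have bnd1: "\<bar>if s < x then d1.g x else x * h1 s\<bar> \<le> 1 + 3 / c" for s
  proof -
    have "\<bar>d1.g x\<bar> \<le> 1" using d1.g_nonneg[of x] d1.g_le1[of x] x by auto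
    moreover have "\<bar>x * h1 s\<bar> \<le> 3 / c"
    proof -
      have "x * h1 s \<le> 1 * h1 s" by (rule mult_right_mono) (use x h1(2)[of s] in auto)
      then show ?thesis using h1(2,3)[of s] x by (simp add: abs_mult)
    qed
    ultimately show ?thesis using c by auto
  qed
  have bnd2: "\<bar>if s < y then d2.g y else y * h2 s\<bar> \<le> 1 + 3 / c" for s
  proof -
    have "\<bar>d2.g y\<bar> \<le> 1" using d2.g_nonneg[of y] d2.g_le1[of y] y by auto
    moreover have "\<bar>y * h2 s\<bar> \<le> 3 / c"
    proof -
      have "y * h2 s \<le> 1 * h2 s" by (rule mult_right_mono) (use y h2(2)[of s] in auto)
      then show ?thesis using h2(2,3)[of s] y by (simp add: abs_mult)
    qed
    ultimately show ?thesis using c by auto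
  qed
  have psi'_int: "psi' absolutely_integrable_on {0..1}"
  proof (rule bounded_abs_int[OF psi'b])
    fix s :: real
    show "\<bar>psi' s\<bar> \<le> (1 + 3 / c) * (1 + 3 / c)"
      unfolding psi'_def abs_mult using bnd1[of s] bnd2[of s] by (intro mult_mono) auto
  qed
  have psi_int: "psi x y absolutely_integrable_on {0..1}"
    by (rule absolutely_integrable_spike[OF psi'_int negN]) (simp add: eq)
  have ipsi: "integral {0..1} (psi x y) = integral {0..1} psi'"
    by (rule integral_spike[OF negN]) (simp add: eq)
  define P where "P s = h1 s * h2 s" for s
  have Pb: "P \<in> borel_measurable borel" unfolding P_def using h1(1) h2(1) by measurable
  have P_int: "P absolutely_integrable_on {z..1}" for z
  proof (rule bounded_abs_int[OF Pb])
    fix s :: real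
    show "\<bar>P s\<bar> \<le> (3 / c) * (3 / c)"
    proof -
      have "3 / c \<ge> 0" using c by simp
      then show ?thesis
        unfolding P_def abs_mult using h1(2,3)[of s] h2(2,3)[of s] by (intro mult_mono) simp_all
    qed
  qed
  have IP: "(P has_integral integral {z..1} P) {z..1}" for z
    by (rule integrable_integral) (rule set_lebesgue_integral_eq_integral(1)[OF P_int])
  have JI: "J z = integral {z..1} P" if z: "c < z" for z
  proof -
    define Q where "Q u = deriv d1.g u * deriv d2.g u" for u
    have QP: "Q s = P s" if "s \<in> {z..1} - N" for s using eqd[OF z that] by (simp add: Q_def P_def)
    have Qint: "Q absolutely_integrable_on {z..1}"
      by (rule absolutely_integrable_spike[OF P_int negN]) (simp add: QP)
    have "J z = (LINT u|lebesgue_on {z..1}. Q u)"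
      by (simp add: J_def Q_def d1.g_eq d2.g_eq)
    also have "\<dots> = integral {z..1} Q" by (rule LINT_eq_integral(2)[OF Qint]) simp
    also have "\<dots> = integral {z..1} P" by (rule integral_spike[OF negN]) (simp add: QP)
    finally show ?thesis .
  qed
  show ?thesis
  proof (cases "x < y")
    case True
    have p1: "(psi' has_integral (x * (d1.g x * d2.g y))) {0..x}"
    proof (rule has_integral_spike[of "{x}"])
      show "((\<lambda>s. d1.g x * d2.g y) has_integral (x * (d1.g x * d2.g y))) {0..x}"
        using has_integral_const_real[of "d1.g x * d2.g y" 0 x] x by simp
      show "psi' s = d1.g x * d2.g y" if "s \<in> {0..x} - {x}" for s
        using that True by (auto simp: psi'_def)
    qed auto
    have p2: "(psi' has_integral ((d1.g y - d1.g x) * (x * d2.g y))) {x..y}"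
    proof (rule has_integral_spike[of "{x, y}"])
      show "((\<lambda>s. h1 s * (x * d2.g y)) has_integral ((d1.g y - d1.g x) * (x * d2.g y))) {x..y}"
        by (rule has_integral_mult_left, rule h1(5)) (use c True y in auto)
      show "psi' s = h1 s * (x * d2.g y)" if "s \<in> {x..y} - {x, y}" for s
        using that by (auto simp: psi'_def)
    qed auto
    have p3: "(psi' has_integral (integral {y..1} P * (x * y))) {y..1}"
    proof (rule has_integral_spike[of "{y}"])
      show "((\<lambda>s. P s * (x * y)) has_integral (integral {y..1} P * (x * y))) {y..1}"
        by (rule has_integral_mult_left, rule IP)
      show "psi' s = P s * (x * y)" if "s \<in> {y..1} - {y}" for s
        using that True by (auto simp: psi'_def P_def)
    qed auto
    have "(psi' has_integral (x * (d1.g x * d2.g y) + (d1.g y - d1.g x) * (x * d2.g y) + integral {y..1} P * (x * y))) {0..1}"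
      by (rule has_integral_combine[OF _ _ has_integral_combine[OF _ _ p1 p2] p3]) (use x y True in auto)
    then have "integral {0..1} psi' = x * (d1.g x * d2.g y) + (d1.g y - d1.g x) * (x * d2.g y) + integral {y..1} P * (x * y)"
      by (rule integral_unique)
    also have "\<dots> = x / y^2 * \<delta>1 y * \<delta>2 y + x * y * J y"
      using JI[of y] c y by (simp add: d1.g_def d2.g_def field_simps power2_eq_square)
    finally show ?thesis using psi_int ipsi True by simp
  next
    case False
    then have yx: "y \<le> x" by simp
    have p1: "(psi' has_integral (y * (d1.g x * d2.g y))) {0..y}"
    proof (rule has_integral_spike[of "{y}"])
      show "((\<lambda>s. d1.g x * d2.g y) has_integral (y * (d1.g x * d2.g y))) {0..y}"
        using has_integral_const_real[of "d1.g x * d2.g y" 0 y] y by simp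
      show "psi' s = d1.g x * d2.g y" if "s \<in> {0..y} - {y}" for s
        using that yx by (auto simp: psi'_def)
    qed auto
    have p2: "(psi' has_integral ((d2.g x - d2.g y) * (y * d1.g x))) {y..x}"
    proof (rule has_integral_spike[of "{x, y}"])
      show "((\<lambda>s. h2 s * (y * d1.g x)) has_integral ((d2.g x - d2.g y) * (y * d1.g x))) {y..x}"
        by (rule has_integral_mult_left, rule h2(5)) (use c yx x in auto)
      show "psi' s = h2 s * (y * d1.g x)" if "s \<in> {y..x} - {x, y}" for s
        using that by (auto simp: psi'_def)
    qed auto
    have p3: "(psi' has_integral (integral {x..1} P * (x * y))) {x..1}"
    proof (rule has_integral_spike[of "{x}"])
      show "((\<lambda>s. P s * (x * y)) has_integral (integral {x..1} P * (x * y))) {x..1}"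
        by (rule has_integral_mult_left, rule IP)
      show "psi' s = P s * (x * y)" if "s \<in> {x..1} - {x}" for s
        using that yx by (auto simp: psi'_def P_def)
    qed auto
    have "(psi' has_integral (y * (d1.g x * d2.g y) + (d2.g x - d2.g y) * (y * d1.g x) + integral {x..1} P * (x * y))) {0..1}"
      by (rule has_integral_combine[OF _ _ has_integral_combine[OF _ _ p1 p2] p3]) (use x y yx in auto)
    then have "integral {0..1} psi' = y * (d1.g x * d2.g y) + (d2.g x - d2.g y) * (y * d1.g x) + integral {x..1} P * (x * y)"
      by (rule integral_unique)
    also have "\<dots> = y / x^2 * \<delta>1 x * \<delta>2 x + x * y * J x"
      using JI[of x] c x by (simp add: d1.g_def d2.g_def field_simps power2_eq_square)
    finally show ?thesis using psi_int ipsi False by simp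
  qed
qed

end

lemma AE_not_point: "AE x in lebesgue. x \<noteq> (a::real)"
proof (rule AE_I')
  show "{a} \<in> null_sets lebesgue" using negligible_sing[of a] by (simp add: negligible_iff_null_sets)
qed auto

lemma (in LSL) diff_nonneg:
  assumes x: "0 \<le> x1" "x1 \<le> x2" "x2 \<le> 1" and s: "0 < s" "s < 1" "s \<noteq> x1" "s \<noteq> x2"
    and D: "0 \<le> D" "D \<le> g s / s"
  shows "0 \<le> (if s < x2 then g x2 else x2 * D) - (if s < x1 then g x1 else x1 * D)"
proof (cases "s < x1")
  case True
  then have "g x1 \<le> g x2" using x s by (intro g_mono) auto
  then show ?thesis using True x by auto
next
  case False
  then have sx1: "x1 < s" using s by auto
  show ?thesis
  proof (cases "s < x2")
    case True
    have "x1 * D \<le> s * D" using sx1 D by (intro mult_right_mono) auto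
    also have "s * D \<le> g s" using D s by (simp add: le_divide_eq mult.commute)
    also have "g s \<le> g x2" using True s x by (intro g_mono) auto
    finally show ?thesis using True False by simp
  next
    case False2: False
    have "x1 * D \<le> x2 * D" using x D by (intro mult_right_mono) auto
    then show ?thesis using False False2 by simp
  qed
qed

context LSL2
begin

lemma psi_integrable:
  assumes "0 \<le> x" "x \<le> 1" "0 \<le> y" "y \<le> 1"
  shows "integrable (lebesgue_on {0..1}) (psi x y)"
proof (cases "x = 0 \<or> y = 0")
  case True
  then have "psi x y = (\<lambda>s. 0)" using psi_x0 psi_y0 by auto
  then show ?thesis by simp
next
  case False
  then have "psi x y absolutely_integrable_on {0..1}"
    using main_calc[of x y] assms by auto
  then show ?thesis by (rule LINT_eq_integral(1)) simp
qed

lemma star_formula: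
  assumes "0 \<le> x" "x \<le> 1" "0 \<le> y" "y \<le> 1"
  shows "star (S_delta \<delta>1) (S_delta \<delta>2) x y =
    (if x < y then x / y^2 * \<delta>1 y * \<delta>2 y + x * y * J y else y / x^2 * \<delta>1 x * \<delta>2 x + x * y * J x)"
proof (cases "x = 0 \<or> y = 0")
  case True
  then have "psi x y = (\<lambda>s. 0)" using psi_x0 psi_y0 by auto
  then have "star (S_delta \<delta>1) (S_delta \<delta>2) x y = 0" by (simp add: star_psi)
  then show ?thesis using True assms by auto
next
  case False
  then have xy: "0 < x" "0 < y" using assms by auto
  have m: "psi x y absolutely_integrable_on {0..1} \<and>
    integral {0..1} (psi x y) = (if x < y then x / y^2 * \<delta>1 y * \<delta>2 y + x * y * J y
                                 else y / x^2 * \<delta>1 x * \<delta>2 x + x * y * J x)"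
    using main_calc[of x y] xy assms by auto
  have "star (S_delta \<delta>1) (S_delta \<delta>2) x y = integral {0..1} (psi x y)"
    unfolding star_psi using m by (intro LINT_eq_integral(2)) auto
  then show ?thesis using m by simp
qed

lemma J1: "J 1 = 0"
proof -
  have "AE u in lebesgue_on {1..1}. deriv (\<lambda>v. \<delta>1 v / v) u * deriv (\<lambda>v. \<delta>2 v / v) u = 0"
  proof -
    have "AE u in lebesgue. u \<in> {1..1} \<longrightarrow> deriv (\<lambda>v. \<delta>1 v / v) u * deriv (\<lambda>v. \<delta>2 v / v) u = 0"
      using AE_not_point[of 1] by eventually_elim auto
    then show ?thesis by (subst AE_restrict_space_iff) auto
  qed
  then show ?thesis unfolding J_def by (rule integral_eq_zero_AE)
qed


lemma two_inc:
  assumes x: "0 \<le> x1" "x1 \<le> x2" "x2 \<le> 1" and y: "0 \<le> y1" "y1 \<le> y2" "y2 \<le> 1"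
  shows "0 \<le> star (S_delta \<delta>1) (S_delta \<delta>2) x2 y2 - star (S_delta \<delta>1) (S_delta \<delta>2) x2 y1
             - star (S_delta \<delta>1) (S_delta \<delta>2) x1 y2 + star (S_delta \<delta>1) (S_delta \<delta>2) x1 y1"
proof -
  define M where "M = lebesgue_on {0..1::real}"
  define A where "A x s = deriv (\<lambda>t. S_delta \<delta>1 x t) s" for x s
  define B where "B y s = deriv (\<lambda>t. S_delta \<delta>2 t y) s" for y s
  have I22: "integrable M (psi x2 y2)" unfolding M_def using x y by (intro psi_integrable) auto
  have I21: "integrable M (psi x2 y1)" unfolding M_def using x y by (intro psi_integrable) auto
  have I12: "integrable M (psi x1 y2)" unfolding M_def using x y by (intro psi_integrable) auto
  have I11: "integrable M (psi x1 y1)" unfolding M_def using x y by (intro psi_integrable) auto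
  have "(LINT s|M. psi x2 y2 s - psi x2 y1 s - psi x1 y2 s + psi x1 y1 s) =
        (LINT s|M. psi x2 y2 s - psi x2 y1 s - psi x1 y2 s) + (LINT s|M. psi x1 y1 s)"
    using I22 I21 I12 I11 by (intro Bochner_Integration.integral_add) auto
  also have "(LINT s|M. psi x2 y2 s - psi x2 y1 s - psi x1 y2 s) =
        (LINT s|M. psi x2 y2 s - psi x2 y1 s) - (LINT s|M. psi x1 y2 s)"
    using I22 I21 I12 by (intro Bochner_Integration.integral_diff) auto
  also have "(LINT s|M. psi x2 y2 s - psi x2 y1 s) = (LINT s|M. psi x2 y2 s) - (LINT s|M. psi x2 y1 s)"
    using I22 I21 by (intro Bochner_Integration.integral_diff) auto
  finally have split: "(LINT s|M. psi x2 y2 s - psi x2 y1 s - psi x1 y2 s + psi x1 y1 s) =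
      (LINT s|M. psi x2 y2 s) - (LINT s|M. psi x2 y1 s) - (LINT s|M. psi x1 y2 s) + (LINT s|M. psi x1 y1 s)" .
  have prod: "psi x2 y2 s - psi x2 y1 s - psi x1 y2 s + psi x1 y1 s = (A x2 s - A x1 s) * (B y2 s - B y1 s)" for s
    by (simp add: psi_def A_def B_def algebra_simps)
  have AEn: "AE s in M. 0 \<le> (A x2 s - A x1 s) * (B y2 s - B y1 s)"
  proof -
    have "AE s in lebesgue. s \<in> {0..1} \<longrightarrow> 0 \<le> (A x2 s - A x1 s) * (B y2 s - B y1 s)"
      using d1.dA[of x1] d1.dA[of x2] d2.dB[of y1] d2.dB[of y2] d1.AE_deriv_g d2.AE_deriv_g
        AE_not_point[of 0] AE_not_point[of 1] AE_not_point[of x1] AE_not_point[of x2]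
        AE_not_point[of y1] AE_not_point[of y2]
    proof eventually_elim
      case (elim s)
      show ?case
      proof
        assume "s \<in> {0..1}"
        then have s: "0 < s" "s < 1" "s \<noteq> x1" "s \<noteq> x2" "s \<noteq> y1" "s \<noteq> y2" using elim by auto
        have ea1: "A x1 s = (if s < x1 then d1.g x1 else x1 * deriv d1.g s)"
          unfolding A_def using elim s by auto
        have ea2: "A x2 s = (if s < x2 then d1.g x2 else x2 * deriv d1.g s)"
          unfolding A_def using elim s by auto
        have eb1: "B y1 s = (if s < y1 then d2.g y1 else y1 * deriv d2.g s)"
          unfolding B_def using elim s by auto
        have eb2: "B y2 s = (if s < y2 then d2.g y2 else y2 * deriv d2.g s)"
          unfolding B_def using elim s by auto
        have D1: "0 \<le> deriv d1.g s" "deriv d1.g s \<le> d1.g s / s" using elim s by auto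
        have D2: "0 \<le> deriv d2.g s" "deriv d2.g s \<le> d2.g s / s" using elim s by auto
        have a: "0 \<le> A x2 s - A x1 s"
          unfolding ea1 ea2 by (rule d1.diff_nonneg[OF x s(1,2,3,4) D1])
        have b: "0 \<le> B y2 s - B y1 s"
          unfolding eb1 eb2 by (rule d2.diff_nonneg[OF y s(1,2,5,6) D2])
        show "0 \<le> (A x2 s - A x1 s) * (B y2 s - B y1 s)" using a b by simp
      qed
    qed
    then show ?thesis unfolding M_def by (subst AE_restrict_space_iff) auto
  qed
  have "0 \<le> (LINT s|M. psi x2 y2 s - psi x2 y1 s - psi x1 y2 s + psi x1 y1 s)"
    unfolding prod by (rule integral_nonneg_AE[OF AEn])
  then show ?thesis unfolding split by (simp add: star_psi M_def)
qed

end

theorem mainTheorem1: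
  assumes "\<delta>1 \<in> diagonals_LSL" and "\<delta>2 \<in> diagonals_LSL"
  shows "(\<forall>x\<in>{0..1::real}. \<forall>y\<in>{0..1::real}.
            star (S_delta \<delta>1) (S_delta \<delta>2) x y =
              (if x < y then
                 x / y^2 * \<delta>1 y * \<delta>2 y +
                 x * y * (LINT u|lebesgue_on {y..1}. deriv (\<lambda>v. \<delta>1 v / v) u * deriv (\<lambda>v. \<delta>2 v / v) u)
               else
                 y / x^2 * \<delta>1 x * \<delta>2 x +
                 x * y * (LINT u|lebesgue_on {x..1}. deriv (\<lambda>v. \<delta>1 v / v) u * deriv (\<lambda>v. \<delta>2 v / v) u)))
         \<and> star (S_delta \<delta>1) (S_delta \<delta>2) \<in> copulas_LSL"
proof -
  interpret LSL2 \<delta>1 \<delta>2 using assms by (simp add: LSL2_def LSL_def)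
  define C where "C = star (S_delta \<delta>1) (S_delta \<delta>2)"
  have CF: "C x y = (if x < y then x / y^2 * \<delta>1 y * \<delta>2 y + x * y * J y else y / x^2 * \<delta>1 x * \<delta>2 x + x * y * J x)"
    if "0 \<le> x" "x \<le> 1" "0 \<le> y" "y \<le> 1" for x y
    unfolding C_def using that by (rule star_formula)
  have F: "\<forall>x\<in>{0..1::real}. \<forall>y\<in>{0..1::real}.
            star (S_delta \<delta>1) (S_delta \<delta>2) x y =
              (if x < y then
                 x / y^2 * \<delta>1 y * \<delta>2 y +
                 x * y * (LINT u|lebesgue_on {y..1}. deriv (\<lambda>v. \<delta>1 v / v) u * deriv (\<lambda>v. \<delta>2 v / v) u)
               else
                 y / x^2 * \<delta>1 x * \<delta>2 x +
                 x * y * (LINT u|lebesgue_on {x..1}. deriv (\<lambda>v. \<delta>1 v / v) u * deriv (\<lambda>v. \<delta>2 v / v) u))"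
    using CF unfolding C_def J_def by auto
  have bnd: "C 0 t = 0 \<and> C t 0 = 0 \<and> C 1 t = t \<and> C t 1 = t" if t: "t \<in> {0..1}" for t
  proof (intro conjI)
    show "C 0 t = 0" using CF[of 0 t] t by auto
    show "C t 0 = 0" using CF[of t 0] t by auto
    show "C 1 t = t" using CF[of 1 t] t by (auto simp: d1.d_one d2.d_one J1)
    show "C t 1 = t" using CF[of t 1] t by (auto simp: d1.d_one d2.d_one J1)
  qed
  have cop: "is_copula C"
    unfolding is_copula_def
  proof (intro conjI ballI impI)
    fix t :: real assume "t \<in> {0..1}"
    then show "C 0 t = 0" "C t 0 = 0" "C 1 t = t" "C t 1 = t" using bnd by auto
  next
    fix x1 x2 y1 y2 :: real
    assume "x1 \<in> {0..1}" "x2 \<in> {0..1}" "y1 \<in> {0..1}" "y2 \<in> {0..1}" "x1 \<le> x2" "y1 \<le> y2"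
    then show "0 \<le> C x2 y2 - C x2 y1 - C x1 y2 + C x1 y1"
      unfolding C_def by (intro two_inc) auto
  qed
  have lsl: "is_LSL C"
    unfolding is_LSL_def
  proof (intro ballI conjI)
    fix x :: real assume x: "x \<in> {0<..1}"
    define a where "a = \<delta>1 x * \<delta>2 x / x^2 + x * J x"
    show "\<exists>a b. \<forall>t\<in>{0..x}. C t x = a * t + b"
    proof (intro exI ballI)
      fix t assume t: "t \<in> {0..x}"
      show "C t x = a * t + 0"
      proof (cases "t < x")
        case True
        then show ?thesis using CF[of t x] t x by (simp add: a_def field_simps)
      next
        case False
        then have "t = x" using t by auto
        then show ?thesis using CF[of x x] x by (simp add: a_def field_simps)
      qed
    qed
    show "\<exists>a b. \<forall>t\<in>{0..x}. C x t = a * t + b"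
    proof (intro exI ballI)
      fix t assume t: "t \<in> {0..x}"
      show "C x t = a * t + 0"
        using CF[of x t] t x by (simp add: a_def field_simps)
    qed
  qed
  show ?thesis using F cop lsl by (simp add: copulas_LSL_def C_def)
qed

end
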